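(* Let $K$ be a commutative integral domain, $n,r\ge1$, $V$ a free $K$-module of rank $n$, and $\Phi:K\mathfrak{S}_r\to\operatorname{End}_K(V^{\otimes r})$ the representation given by right place permutations $(u_1\otimes\cdots\otimes u_r)\sigma=u_{1\sigma^{-1}}\otimes\cdots\otimes u_{r\sigma^{-1}}$. Then $\Phi(K\mathfrak{S}_r)$ is a free $K$-module of rank $$r!-\sum_{\lambda\in P}N(\lambda)^2,$$ where $P$ is the set of partitions $\lambda$ of $r$ with $\lambda_1>n$ and $N(\lambda)$ is the number of standard tableaux of shape $\lambda$. In particular this rank is independent of $K$.
   Context: A standard tableau of shape $\lambda$ (a partition of $r$) is a filling of the Young diagram of $\lambda$ with $1,\dots,r$, each used once, increasing along rows and down columns. *)

theory Defs
  imports Main "HOL.Modules" "HOL-Library.Function_Algebras" "HOL-Combinatorics.Permutations"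
begin

text \<open>Basis of V^{\<otimes> r} for V = K^n: words of length r over {0..<n}
  (the tensor e_{w_1} \<otimes> ... \<otimes> e_{w_r}).\<close>
definition words :: "nat \<Rightarrow> nat \<Rightarrow> nat list set" where
  "words n r = {w. length w = r \<and> set w \<subseteq> {..<n}}"

definition place_perm :: "(nat \<Rightarrow> nat) \<Rightarrow> nat list \<Rightarrow> nat list" where
  "place_perm \<sigma> w = map (\<lambda>i. w ! (inv \<sigma> i)) [0..<length w]"

text \<open>Endomorphisms of V^{\<otimes> r} as matrices indexed by words (entry (v,w) is the
  v-coordinate of the image of basis vector w); Phi sigma is the matrix of the action.\<close>
definition Phi :: "nat \<Rightarrow> nat \<Rightarrow> (nat \<Rightarrow> nat) \<Rightarrow> nat list \<Rightarrow> nat list \<Rightarrow> 'a::comm_ring_1" where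
  "Phi n r \<sigma> = (\<lambda>v w. if v \<in> words n r \<and> w \<in> words n r \<and> v = place_perm \<sigma> w then 1 else 0)"

definition mscale :: "'a::comm_ring_1 \<Rightarrow> (nat list \<Rightarrow> nat list \<Rightarrow> 'a) \<Rightarrow> (nat list \<Rightarrow> nat list \<Rightarrow> 'a)" where
  "mscale c M = (\<lambda>v w. c * M v w)"

definition free_of_rank :: "(nat list \<Rightarrow> nat list \<Rightarrow> 'a::comm_ring_1) set \<Rightarrow> nat \<Rightarrow> bool" where
  "free_of_rank S m \<longleftrightarrow> (\<exists>B. finite B \<and> card B = m \<and> B \<subseteq> S \<and>
      \<not> module.dependent mscale B \<and> module.span mscale B = S)"

definition partitions :: "nat \<Rightarrow> nat list set" where
  "partitions r = {lam. sum_list lam = r \<and> sorted_wrt (\<ge>) lam \<and> 0 \<notin> set lam}"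

definition young_cells :: "nat list \<Rightarrow> (nat \<times> nat) set" where
  "young_cells lam = {(i, j). i < length lam \<and> j < lam ! i}"

definition standard_tableaux :: "nat list \<Rightarrow> ((nat \<times> nat) \<Rightarrow> nat) set" where
  "standard_tableaux lam = {T.
     bij_betw T (young_cells lam) {1..sum_list lam} \<and>
     (\<forall>c. c \<notin> young_cells lam \<longrightarrow> T c = 0) \<and>
     (\<forall>i j. (i, j) \<in> young_cells lam \<and> (i, Suc j) \<in> young_cells lam \<longrightarrow> T (i, j) < T (i, Suc j)) \<and>
     (\<forall>i j. (i, j) \<in> young_cells lam \<and> (Suc i, j) \<in> young_cells lam \<longrightarrow> T (i, j) < T (Suc i, j))}"

definition num_std_tableaux :: "nat list \<Rightarrow> nat" where
  "num_std_tableaux lam = card (standard_tableaux lam)"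

end

theory Submission
  imports Defs
begin

definition perms :: "nat \<Rightarrow> (nat \<Rightarrow> nat) set" where
  "perms r = {\<sigma>. \<sigma> permutes {..<r}}"

definition incr :: "(nat \<Rightarrow> nat) \<Rightarrow> nat set \<Rightarrow> bool" where
  "incr \<sigma> S \<longleftrightarrow> (\<forall>i\<in>S. \<forall>j\<in>S. i < j \<longrightarrow> \<sigma> i < \<sigma> j)"

definition good :: "nat \<Rightarrow> nat \<Rightarrow> (nat \<Rightarrow> nat) \<Rightarrow> bool" where
  "good n r \<sigma> \<longleftrightarrow> (\<forall>S. S \<subseteq> {..<r} \<longrightarrow> incr \<sigma> S \<longrightarrow> card S \<le> n)"

definition lexless :: "nat \<Rightarrow> (nat \<Rightarrow> nat) \<Rightarrow> (nat \<Rightarrow> nat) \<Rightarrow> bool" where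
  "lexless r \<tau> \<sigma> \<longleftrightarrow> (\<exists>p<r. (\<forall>i<p. \<tau> i = \<sigma> i) \<and> \<tau> p < \<sigma> p)"

lemma lexless_irrefl: "\<not> lexless r \<sigma> \<sigma>"
  by (auto simp: lexless_def)

lemma lexless_trans: "lexless r a b \<Longrightarrow> lexless r b c \<Longrightarrow> lexless r a c"
  unfolding lexless_def
proof (elim exE conjE)
  fix p q assume p: "p < r" "\<forall>i<p. a i = b i" "a p < b p"
    and q: "q < r" "\<forall>i<q. b i = c i" "b q < c q"
  show "\<exists>p<r. (\<forall>i<p. a i = c i) \<and> a p < c p"
  proof (cases "p < q")
    case True then show ?thesis using p q by (intro exI[of _ p]) auto
  next
    case False
    show ?thesis
    proof (cases "p = q")
      case True then show ?thesis using p q by (intro exI[of _ p]) auto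
    next
      case False
      with \<open>\<not> p < q\<close> have "q < p" by auto
      then show ?thesis using p q by (intro exI[of _ q]) auto
    qed
  qed
qed

lemma lexless_asym: "lexless r a b \<Longrightarrow> \<not> lexless r b a"
  using lexless_trans lexless_irrefl by blast

lemma lexless_linear:
  assumes "\<sigma> \<in> perms r" "\<tau> \<in> perms r" "\<sigma> \<noteq> \<tau>"
  shows "lexless r \<sigma> \<tau> \<or> lexless r \<tau> \<sigma>"
proof -
  have "\<exists>i<r. \<sigma> i \<noteq> \<tau> i"
  proof (rule ccontr)
    assume "\<not> ?thesis"
    then have "\<sigma> x = \<tau> x" for x
    proof (cases "x < r")
      case False
      then show ?thesis using assms(1,2) unfolding perms_def
        by (simp add: permutes_not_in)
    qed (use \<open>\<not> (\<exists>i<r. \<sigma> i \<noteq> \<tau> i)\<close> in auto)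
    then show False using assms(3) by auto
  qed
  define p where "p = (LEAST i. i < r \<and> \<sigma> i \<noteq> \<tau> i)"
  have p: "p < r" "\<sigma> p \<noteq> \<tau> p"
    using LeastI_ex[OF \<open>\<exists>i<r. \<sigma> i \<noteq> \<tau> i\<close>] unfolding p_def by auto
  have lt: "\<forall>i<p. \<sigma> i = \<tau> i"
  proof (intro allI impI)
    fix i assume "i < p"
    then have "\<not> (i < r \<and> \<sigma> i \<noteq> \<tau> i)"
      unfolding p_def by (rule not_less_Least)
    then show "\<sigma> i = \<tau> i" using \<open>i < p\<close> p(1) by auto
  qed
  show ?thesis
  proof (cases "\<sigma> p < \<tau> p")
    case True then show ?thesis using p lt unfolding lexless_def by blast
  next
    case False then have "\<tau> p < \<sigma> p" using p by auto
    then show ?thesis using p lt unfolding lexless_def by (metis (no_types))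
  qed
qed

lemma perms_finite: "finite (perms r)"
  unfolding perms_def by (simp add: finite_permutations)

lemma card_perms: "card (perms r) = fact r"
  unfolding perms_def using card_permutations[of "{..<r}"] by simp

lemma sum_fun_app: "(sum f A) x = sum (\<lambda>a. f a x) A"
  by (induction A rule: infinite_finite_induct) auto

lemma sum_fun_app2: "(sum f A) x y = sum (\<lambda>a. f a x y) A"
  by (simp add: sum_fun_app)

interpretation M: module mscale
proof
  fix a b :: "'a::comm_ring_1" and x y :: "nat list \<Rightarrow> nat list \<Rightarrow> 'a"
  show "mscale a (x + y) = mscale a x + mscale a y"
    unfolding mscale_def by (rule ext, rule ext) (simp add: distrib_left)
  show "mscale (a + b) x = mscale a x + mscale b x"
    unfolding mscale_def by (rule ext, rule ext) (simp add: distrib_right)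
  show "mscale a (mscale b x) = mscale (a * b) x"
    unfolding mscale_def by (rule ext, rule ext) (simp add: mult.assoc)
  show "mscale 1 x = x"
    unfolding mscale_def by simp
qed

lemma words_length: "w \<in> words n r \<Longrightarrow> length w = r"
  by (simp add: words_def)

lemma place_perm_transpose_inv:
  assumes "\<rho> permutes {..<r}" "w ! a = w ! b"
  shows "place_perm (\<rho> \<circ> Transposition.transpose a b) w = place_perm \<rho> w"
proof -
  have bt: "bij (Transposition.transpose a b)" by simp
  have br: "bij \<rho>" using assms(1) by (rule permutes_bij)
  have inv: "inv (\<rho> \<circ> Transposition.transpose a b) = Transposition.transpose a b \<circ> inv \<rho>"
    using o_inv_distrib[OF br bt] by simp
  have "w ! (Transposition.transpose a b y) = w ! y" for y
    using assms(2) by (cases "y = a"; cases "y = b") auto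
  then show ?thesis unfolding place_perm_def inv by simp
qed

lemma pigeon_word:
  assumes "w \<in> words n r" "P \<subseteq> {..<r}" "n < card P"
  obtains a b where "a \<in> P" "b \<in> P" "a \<noteq> b" "w ! a = w ! b"
proof -
  have "\<not> inj_on (\<lambda>i. w ! i) P"
  proof
    assume inj: "inj_on (\<lambda>i. w ! i) P"
    have "(\<lambda>i. w ! i) ` P \<subseteq> {..<n}"
      using assms(1,2) unfolding words_def by (auto dest!: nth_mem)
    then have "card ((\<lambda>i. w ! i) ` P) \<le> n"
      by (metis card_lessThan card_mono finite_lessThan)
    then show False using card_image[OF inj] assms(3) by simp
  qed
  then show ?thesis using that unfolding inj_on_def by blast
qed

lemma antisym_sum:
  assumes "\<sigma> \<in> perms r" "P \<subseteq> {..<r}" "n < card P"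
  shows "(\<Sum>\<pi>\<in>{\<pi>. \<pi> permutes P \<and> evenperm \<pi>}. (Phi n r (\<sigma> \<circ> \<pi>) :: nat list \<Rightarrow> nat list \<Rightarrow> 'a::comm_ring_1))
       = (\<Sum>\<pi>\<in>{\<pi>. \<pi> permutes P \<and> \<not> evenperm \<pi>}. Phi n r (\<sigma> \<circ> \<pi>))"
proof (rule ext, rule ext)
  fix v w
  show "(\<Sum>\<pi>\<in>{\<pi>. \<pi> permutes P \<and> evenperm \<pi>}. (Phi n r (\<sigma> \<circ> \<pi>) :: nat list \<Rightarrow> nat list \<Rightarrow> 'a)) v w
       = (\<Sum>\<pi>\<in>{\<pi>. \<pi> permutes P \<and> \<not> evenperm \<pi>}. (Phi n r (\<sigma> \<circ> \<pi>) :: nat list \<Rightarrow> nat list \<Rightarrow> 'a)) v w"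
  proof (cases "w \<in> words n r")
    case False
    then show ?thesis by (simp add: sum_fun_app2 Phi_def)
  next
    case True
    obtain a b where ab: "a \<in> P" "b \<in> P" "a \<noteq> b" "w ! a = w ! b"
      using pigeon_word[OF True assms(2,3)] by blast
    define t where "t = Transposition.transpose a b"
    have tP: "t permutes P" unfolding t_def using ab by (simp add: permutes_swap_id)
    have finP: "finite P" using assms(2) finite_subset by blast
    have tperm: "permutation t" using tP finP permutation_permutes by blast
    have tev: "\<not> evenperm t" unfolding t_def using ab(3) by (simp add: evenperm_swap)
    have tt: "t \<circ> t = id" unfolding t_def by simp
    have bij: "bij_betw (\<lambda>\<pi>. \<pi> \<circ> t) {\<pi>. \<pi> permutes P \<and> evenperm \<pi>} {\<pi>. \<pi> permutes P \<and> \<not> evenperm \<pi>}"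
    proof (rule bij_betw_byWitness[where f' = "\<lambda>\<pi>. \<pi> \<circ> t"])
      show "\<forall>x\<in>{\<pi>. \<pi> permutes P \<and> evenperm \<pi>}. x \<circ> t \<circ> t = x"
        using tt by (simp add: comp_assoc)
      show "\<forall>x\<in>{\<pi>. \<pi> permutes P \<and> \<not> evenperm \<pi>}. x \<circ> t \<circ> t = x"
        using tt by (simp add: comp_assoc)
      show "(\<lambda>\<pi>. \<pi> \<circ> t) ` {\<pi>. \<pi> permutes P \<and> evenperm \<pi>} \<subseteq> {\<pi>. \<pi> permutes P \<and> \<not> evenperm \<pi>}"
      proof clarify
        fix \<pi> assume "\<pi> permutes P" "evenperm \<pi>"
        moreover have "permutation \<pi>" using \<open>\<pi> permutes P\<close> finP permutation_permutes by blast
        ultimately show "\<pi> \<circ> t permutes P \<and> \<not> evenperm (\<pi> \<circ> t)"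
          using tP tev tperm by (simp add: permutes_compose evenperm_comp)
      qed
      show "(\<lambda>\<pi>. \<pi> \<circ> t) ` {\<pi>. \<pi> permutes P \<and> \<not> evenperm \<pi>} \<subseteq> {\<pi>. \<pi> permutes P \<and> evenperm \<pi>}"
      proof clarify
        fix \<pi> assume "\<pi> permutes P" "\<not> evenperm \<pi>"
        moreover have "permutation \<pi>" using \<open>\<pi> permutes P\<close> finP permutation_permutes by blast
        ultimately show "\<pi> \<circ> t permutes P \<and> evenperm (\<pi> \<circ> t)"
          using tP tev tperm by (simp add: permutes_compose evenperm_comp)
      qed
    qed
    have inv: "(Phi n r (\<sigma> \<circ> (\<pi> \<circ> t)) :: nat list \<Rightarrow> nat list \<Rightarrow> 'a) v w = Phi n r (\<sigma> \<circ> \<pi>) v w"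
      if "\<pi> permutes P" for \<pi>
    proof -
      have "\<sigma> \<circ> \<pi> permutes {..<r}"
        using assms(1) permutes_subset[OF that assms(2)] unfolding perms_def
        by (simp add: permutes_compose)
      then have "place_perm (\<sigma> \<circ> \<pi> \<circ> t) w = place_perm (\<sigma> \<circ> \<pi>) w"
        unfolding t_def using ab(4) by (rule place_perm_transpose_inv)
      then show ?thesis by (simp add: Phi_def comp_assoc)
    qed
    have "(\<Sum>\<pi>\<in>{\<pi>. \<pi> permutes P \<and> \<not> evenperm \<pi>}. (Phi n r (\<sigma> \<circ> \<pi>) :: nat list \<Rightarrow> nat list \<Rightarrow> 'a) v w)
        = (\<Sum>\<pi>\<in>{\<pi>. \<pi> permutes P \<and> evenperm \<pi>}. (Phi n r (\<sigma> \<circ> (\<pi> \<circ> t)) :: nat list \<Rightarrow> nat list \<Rightarrow> 'a) v w)"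
      using sum.reindex_bij_betw[OF bij, of "\<lambda>\<pi>. (Phi n r (\<sigma> \<circ> \<pi>) :: nat list \<Rightarrow> nat list \<Rightarrow> 'a) v w"]
      by simp
    also have "\<dots> = (\<Sum>\<pi>\<in>{\<pi>. \<pi> permutes P \<and> evenperm \<pi>}. (Phi n r (\<sigma> \<circ> \<pi>) :: nat list \<Rightarrow> nat list \<Rightarrow> 'a) v w)"
      by (rule sum.cong) (auto simp: inv)
    finally show ?thesis by (simp add: sum_fun_app2)
  qed
qed

lemma first_moved:
  fixes \<pi> :: "nat \<Rightarrow> nat"
  assumes "\<pi> permutes P" "\<pi> \<noteq> id"
  obtains p where "p \<in> P" "\<pi> p \<noteq> p" "\<forall>i<p. \<pi> i = i" "\<pi> p \<in> P" "p < \<pi> p"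
proof -
  have ex: "\<exists>p. \<pi> p \<noteq> p" using assms(2) by auto
  define p where "p = (LEAST p. \<pi> p \<noteq> p)"
  have p1: "\<pi> p \<noteq> p" unfolding p_def using LeastI_ex[OF ex] .
  have p2: "\<forall>i<p. \<pi> i = i" unfolding p_def using not_less_Least by blast
  have p3: "p \<in> P" using p1 assms(1) permutes_not_in by metis
  have p4: "\<pi> p \<in> P" using p3 assms(1) permutes_in_image by metis
  have p5: "p < \<pi> p"
  proof (rule ccontr)
    assume "\<not> p < \<pi> p"
    then have "\<pi> p < p" using p1 by auto
    then have "\<pi> (\<pi> p) = \<pi> p" using p2 by auto
    then have "\<pi> p = p" using permutes_inj[OF assms(1)] by (meson injD)
    then show False using p1 by simp
  qed
  show ?thesis using that p3 p1 p2 p4 p5 by blast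
qed

lemma lexless_comp:
  assumes "\<pi> permutes P" "\<pi> \<noteq> id" "incr \<sigma> P" "P \<subseteq> {..<r}"
  shows "lexless r \<sigma> (\<sigma> \<circ> \<pi>)"
proof -
  obtain p where p: "p \<in> P" "\<pi> p \<noteq> p" "\<forall>i<p. \<pi> i = i" "\<pi> p \<in> P" "p < \<pi> p"
    using first_moved[OF assms(1,2)] by blast
  have "\<sigma> p < \<sigma> (\<pi> p)" using assms(3) p unfolding incr_def by blast
  then show ?thesis unfolding lexless_def using p assms(4)
    by (intro exI[of _ p]) auto
qed

lemma perms_comp:
  assumes "\<sigma> \<in> perms r" "\<pi> permutes P" "P \<subseteq> {..<r}"
  shows "\<sigma> \<circ> \<pi> \<in> perms r"
  using assms permutes_subset[OF assms(2,3)] unfolding perms_def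
  by (simp add: permutes_compose)

lemma span_good:
  assumes "\<sigma> \<in> perms r"
  shows "(Phi n r \<sigma> :: nat list \<Rightarrow> nat list \<Rightarrow> 'a::comm_ring_1)
           \<in> M.span (Phi n r ` {\<tau>\<in>perms r. good n r \<tau>})"
  using assms
proof (induction "card {\<tau>\<in>perms r. lexless r \<sigma> \<tau>}" arbitrary: \<sigma> rule: less_induct)
  case less
  show ?case
  proof (cases "good n r \<sigma>")
    case True
    then show ?thesis using less.prems by (intro M.span_base) auto
  next
    case False
    then obtain S where S: "S \<subseteq> {..<r}" "incr \<sigma> S" "n < card S"
      unfolding good_def by (auto simp: not_le)
    have finS: "finite S" using S(1) finite_subset by blast
    define E where "E = {\<pi>. \<pi> permutes S \<and> evenperm \<pi>}"
    define Od where "Od = {\<pi>. \<pi> permutes S \<and> \<not> evenperm \<pi>}"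
    have finE: "finite E" unfolding E_def using finite_permutations[OF finS]
      by (rule rev_finite_subset) auto
    have finOd: "finite Od" unfolding Od_def using finite_permutations[OF finS]
      by (rule rev_finite_subset) auto
    have idE: "id \<in> E" unfolding E_def by (simp add: permutes_id)
    have eq: "(\<Sum>\<pi>\<in>E. (Phi n r (\<sigma> \<circ> \<pi>) :: nat list \<Rightarrow> nat list \<Rightarrow> 'a))
        = (\<Sum>\<pi>\<in>Od. Phi n r (\<sigma> \<circ> \<pi>))"
      unfolding E_def Od_def by (rule antisym_sum[OF less.prems S(1,3)])
    have "(\<Sum>\<pi>\<in>E. (Phi n r (\<sigma> \<circ> \<pi>) :: nat list \<Rightarrow> nat list \<Rightarrow> 'a))
        = Phi n r \<sigma> + (\<Sum>\<pi>\<in>E - {id}. Phi n r (\<sigma> \<circ> \<pi>))"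
      using sum.remove[OF finE idE, of "\<lambda>\<pi>. (Phi n r (\<sigma> \<circ> \<pi>) :: nat list \<Rightarrow> nat list \<Rightarrow> 'a)"] by simp
    then have decomp: "(Phi n r \<sigma> :: nat list \<Rightarrow> nat list \<Rightarrow> 'a)
        = (\<Sum>\<pi>\<in>Od. Phi n r (\<sigma> \<circ> \<pi>)) - (\<Sum>\<pi>\<in>E - {id}. Phi n r (\<sigma> \<circ> \<pi>))"
      using eq by (simp add: algebra_simps)
    have IH: "(Phi n r (\<sigma> \<circ> \<pi>) :: nat list \<Rightarrow> nat list \<Rightarrow> 'a) \<in> M.span (Phi n r ` {\<tau>\<in>perms r. good n r \<tau>})"
      if "\<pi> permutes S" "\<pi> \<noteq> id" for \<pi>
    proof -
      have lx: "lexless r \<sigma> (\<sigma> \<circ> \<pi>)" using lexless_comp[OF that S(2,1)] .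
      have pc: "\<sigma> \<circ> \<pi> \<in> perms r" using perms_comp[OF less.prems that(1) S(1)] .
      have sub: "{\<tau>\<in>perms r. lexless r (\<sigma> \<circ> \<pi>) \<tau>} \<subset> {\<tau>\<in>perms r. lexless r \<sigma> \<tau>}"
        using lx pc lexless_trans lexless_irrefl by blast
      have "card {\<tau>\<in>perms r. lexless r (\<sigma> \<circ> \<pi>) \<tau>} < card {\<tau>\<in>perms r. lexless r \<sigma> \<tau>}"
        using sub perms_finite by (intro psubset_card_mono) auto
      then show ?thesis using less.hyps pc by blast
    qed
    have "(\<Sum>\<pi>\<in>Od. (Phi n r (\<sigma> \<circ> \<pi>) :: nat list \<Rightarrow> nat list \<Rightarrow> 'a)) \<in> M.span (Phi n r ` {\<tau>\<in>perms r. good n r \<tau>})"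
    proof (rule M.span_sum)
      fix \<pi> assume "\<pi> \<in> Od"
      then have "\<pi> permutes S" "\<pi> \<noteq> id" unfolding Od_def by auto
      then show "(Phi n r (\<sigma> \<circ> \<pi>) :: nat list \<Rightarrow> nat list \<Rightarrow> 'a) \<in> M.span (Phi n r ` {\<tau>\<in>perms r. good n r \<tau>})"
        by (rule IH)
    qed
    moreover have "(\<Sum>\<pi>\<in>E - {id}. (Phi n r (\<sigma> \<circ> \<pi>) :: nat list \<Rightarrow> nat list \<Rightarrow> 'a)) \<in> M.span (Phi n r ` {\<tau>\<in>perms r. good n r \<tau>})"
    proof (rule M.span_sum)
      fix \<pi> assume "\<pi> \<in> E - {id}"
      then have "\<pi> permutes S" "\<pi> \<noteq> id" unfolding E_def by auto
      then show "(Phi n r (\<sigma> \<circ> \<pi>) :: nat list \<Rightarrow> nat list \<Rightarrow> 'a) \<in> M.span (Phi n r ` {\<tau>\<in>perms r. good n r \<tau>})"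
        by (rule IH)
    qed
    ultimately show ?thesis by (subst decomp) (rule M.span_diff)
  qed
qed

definition col :: "(nat \<Rightarrow> nat) \<Rightarrow> nat \<Rightarrow> nat" where
  "col \<sigma> i = Max (card ` {S. S \<subseteq> {..i} \<and> i \<in> S \<and> incr \<sigma> S})"

lemma col_fin: "finite {S. S \<subseteq> {..i} \<and> i \<in> S \<and> incr \<sigma> S}"
  by (rule finite_subset[of _ "Pow {..i}"]) auto

lemma col_single: "{i} \<in> {S. S \<subseteq> {..i} \<and> i \<in> S \<and> incr \<sigma> S}"
  by (auto simp: incr_def)

lemma Max_card_in: "finite X \<Longrightarrow> X \<noteq> {} \<Longrightarrow> \<exists>S\<in>X. card S = Max (card ` X)"
proof -
  assume "finite X" "X \<noteq> {}"
  then have "Max (card ` X) \<in> card ` X" by simp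
  then show ?thesis by (metis imageE)
qed

lemma col_witness: "\<exists>S. S \<subseteq> {..i} \<and> i \<in> S \<and> incr \<sigma> S \<and> card S = col \<sigma> i"
proof -
  obtain S where "S \<in> {S. S \<subseteq> {..i} \<and> i \<in> S \<and> incr \<sigma> S}"
    "card S = Max (card ` {S. S \<subseteq> {..i} \<and> i \<in> S \<and> incr \<sigma> S})"
    using Max_card_in[OF col_fin[of i \<sigma>]] col_single[of i \<sigma>] by blast
  then show ?thesis unfolding col_def by blast
qed

lemma col_ge: "S \<subseteq> {..i} \<Longrightarrow> i \<in> S \<Longrightarrow> incr \<sigma> S \<Longrightarrow> card S \<le> col \<sigma> i"
  unfolding col_def by (rule Max_ge) (use col_fin in auto)

lemma col_ge1: "1 \<le> col \<sigma> i"
  using col_ge[of "{i}" i \<sigma>] by (auto simp: incr_def)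

lemma col_le:
  assumes "good n r \<sigma>" "i < r"
  shows "col \<sigma> i \<le> n"
proof -
  obtain S where S: "S \<subseteq> {..i}" "i \<in> S" "incr \<sigma> S" "card S = col \<sigma> i"
    using col_witness by blast
  have "S \<subseteq> {..<r}" using S(1) assms(2) by auto
  then show ?thesis using assms(1) S unfolding good_def by auto
qed

lemma col_mono:
  assumes "i < j" "\<sigma> i < \<sigma> j"
  shows "col \<sigma> i < col \<sigma> j"
proof -
  obtain S where S: "S \<subseteq> {..i}" "i \<in> S" "incr \<sigma> S" "card S = col \<sigma> i"
    using col_witness by blast
  have finS: "finite S" using S(1) finite_subset by blast
  have le: "\<sigma> a \<le> \<sigma> i" if "a \<in> S" for a
  proof (cases "a = i")
    case False
    then have "a < i" using S(1) that by auto
    then have "\<sigma> a < \<sigma> i" using S(2,3) that unfolding incr_def by blast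
    then show ?thesis by simp
  qed simp
  have "incr \<sigma> (insert j S)"
    unfolding incr_def
  proof (intro ballI impI)
    fix a b assume a: "a \<in> insert j S" and b: "b \<in> insert j S" and ab: "a < b"
    show "\<sigma> a < \<sigma> b"
    proof (cases "b = j")
      case True
      then have "a \<in> S" using a ab by auto
      then show ?thesis using le assms(2) True by fastforce
    next
      case False
      then have bS: "b \<in> S" using b by auto
      then have "b \<le> i" using S(1) by auto
      then have "a \<noteq> j" using ab assms(1) by auto
      then have "a \<in> S" using a by auto
      then show ?thesis using S(3) bS ab unfolding incr_def by auto
    qed
  qed
  moreover have "insert j S \<subseteq> {..j}" using S(1) assms(1) by auto
  moreover have "j \<notin> S" using S(1) assms(1) by auto
  ultimately have "card (insert j S) \<le> col \<sigma> j" "card (insert j S) = Suc (card S)"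
    using col_ge[of "insert j S" j \<sigma>] finS by auto
  then show ?thesis using S(4) by simp
qed

definition cw :: "(nat \<Rightarrow> nat) \<Rightarrow> nat \<Rightarrow> nat list" where
  "cw \<sigma> r = map (\<lambda>i. col \<sigma> i - 1) [0..<r]"

lemma cw_nth: "i < r \<Longrightarrow> cw \<sigma> r ! i = col \<sigma> i - 1"
  by (simp add: cw_def)

lemma cw_length: "length (cw \<sigma> r) = r"
  by (simp add: cw_def)

lemma cw_words:
  assumes "good n r \<sigma>" shows "cw \<sigma> r \<in> words n r"
proof -
  have "col \<sigma> i - 1 < n" if "i < r" for i
    using col_le[OF assms that] col_ge1[of \<sigma> i] by linarith
  then show ?thesis by (auto simp: words_def cw_def)
qed

lemma perm_inv_lt: "\<sigma> \<in> perms r \<Longrightarrow> i < r \<Longrightarrow> inv \<sigma> i < r"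
  unfolding perms_def using permutes_in_image[OF permutes_inv, of \<sigma> "{..<r}" i] by simp

lemma place_perm_words:
  assumes "\<sigma> \<in> perms r" "w \<in> words n r"
  shows "place_perm \<sigma> w \<in> words n r"
proof -
  have "w ! (inv \<sigma> i) < n" if "i < r" for i
  proof -
    have "inv \<sigma> i < length w" using assms(2) perm_inv_lt[OF assms(1) that] by (simp add: words_def)
    then have "w ! (inv \<sigma> i) \<in> set w" by (rule nth_mem)
    then show ?thesis using assms(2) by (auto simp: words_def)
  qed
  then show ?thesis using assms(2) unfolding words_def place_perm_def by auto
qed

lemma diag:
  assumes "\<sigma> \<in> perms r" "good n r \<sigma>"
  shows "(Phi n r \<sigma> (place_perm \<sigma> (cw \<sigma> r)) (cw \<sigma> r) :: 'a::comm_ring_1) = 1"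
  using cw_words[OF assms(2)] place_perm_words[OF assms(1) cw_words[OF assms(2)]]
  by (simp add: Phi_def)

lemma triang:
  assumes "\<sigma> \<in> perms r" "good n r \<sigma>" "\<tau> \<in> perms r"
    and nz: "(Phi n r \<tau> (place_perm \<sigma> (cw \<sigma> r)) (cw \<sigma> r) :: 'a::comm_ring_1) \<noteq> 0"
  shows "\<tau> = \<sigma> \<or> lexless r \<tau> \<sigma>"
proof (cases "\<tau> = \<sigma>")
  case ne: False
  define w where "w = cw \<sigma> r"
  have pp: "place_perm \<sigma> w = place_perm \<tau> w"
    using nz unfolding w_def by (auto simp: Phi_def split: if_splits)
  have eqw: "w ! (inv \<sigma> i) = w ! (inv \<tau> i)" if "i < r" for i
  proof -
    have "place_perm \<sigma> w ! i = place_perm \<tau> w ! i" using pp by simp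
    then show ?thesis using that by (simp add: place_perm_def w_def cw_length)
  qed
  have sp: "\<sigma> permutes {..<r}" "\<tau> permutes {..<r}" using assms(1,3) by (auto simp: perms_def)
  define \<pi> where "\<pi> = inv \<sigma> \<circ> \<tau>"
  have pip: "\<pi> permutes {..<r}" unfolding \<pi>_def using sp by (simp add: permutes_compose permutes_inv)
  have stp: "\<sigma> (\<pi> x) = \<tau> x" for x unfolding \<pi>_def using sp(1) by (simp add: permutes_inverses)
  have npi: "\<pi> \<noteq> id"
  proof
    assume "\<pi> = id"
    then have "\<tau> x = \<sigma> x" for x using stp[of x] by simp
    then show False using ne by auto
  qed
  obtain p where p: "p \<in> {..<r}" "\<pi> p \<noteq> p" "\<forall>i<p. \<pi> i = i" "\<pi> p \<in> {..<r}" "p < \<pi> p"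
    by (rule first_moved[OF pip npi])
  have "w ! (\<pi> p) = w ! p"
  proof -
    have "\<tau> p < r" using permutes_in_image[OF sp(2), of p] p(1) by simp
    from eqw[OF this] show ?thesis unfolding \<pi>_def using sp(2) by (simp add: permutes_inverses)
  qed
  then have "col \<sigma> (\<pi> p) = col \<sigma> p"
    using p(1,4) col_ge1[of \<sigma> p] col_ge1[of \<sigma> "\<pi> p"] unfolding w_def by (simp add: cw_nth)
  then have "\<not> \<sigma> p < \<sigma> (\<pi> p)" using col_mono[of p "\<pi> p" \<sigma>] p(5) by auto
  moreover have "\<sigma> p \<noteq> \<sigma> (\<pi> p)" using p(2) inj_eq[OF permutes_inj[OF sp(1)]] by simp
  ultimately have "\<sigma> (\<pi> p) < \<sigma> p" by linarith
  then have "\<tau> p < \<sigma> p" using stp[of p] by simp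
  moreover have "\<forall>i<p. \<tau> i = \<sigma> i"
  proof (intro allI impI)
    fix i assume "i < p"
    then show "\<tau> i = \<sigma> i" using stp[of i] p(3) by simp
  qed
  ultimately have "lexless r \<tau> \<sigma>" unfolding lexless_def using p(1) by auto
  then show ?thesis by simp
qed simp

lemma Phi_inj_good: "inj_on (Phi n r :: _ \<Rightarrow> _ \<Rightarrow> _ \<Rightarrow> 'a::comm_ring_1) {\<tau>\<in>perms r. good n r \<tau>}"
proof (rule inj_onI)
  fix \<sigma> \<tau> assume s: "\<sigma> \<in> {\<tau>\<in>perms r. good n r \<tau>}" and t: "\<tau> \<in> {\<tau>\<in>perms r. good n r \<tau>}"
    and eq: "(Phi n r \<sigma> :: _ \<Rightarrow> _ \<Rightarrow> 'a) = Phi n r \<tau>"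
  show "\<sigma> = \<tau>"
  proof (rule ccontr)
    assume ne: "\<sigma> \<noteq> \<tau>"
    have "(Phi n r \<sigma> (place_perm \<sigma> (cw \<sigma> r)) (cw \<sigma> r) :: 'a) = 1"
      using diag[of \<sigma> r n] s by simp
    then have "(Phi n r \<tau> (place_perm \<sigma> (cw \<sigma> r)) (cw \<sigma> r) :: 'a) \<noteq> 0"
      using eq by simp
    then have 1: "lexless r \<tau> \<sigma>" using triang[of \<sigma> r n \<tau>] s t ne by auto
    have "(Phi n r \<tau> (place_perm \<tau> (cw \<tau> r)) (cw \<tau> r) :: 'a) = 1"
      using diag[of \<tau> r n] t by simp
    then have "(Phi n r \<sigma> (place_perm \<tau> (cw \<tau> r)) (cw \<tau> r) :: 'a) \<noteq> 0"
      using eq by simp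
    then have 2: "lexless r \<sigma> \<tau>" using triang[of \<tau> r n \<sigma>] s t ne by auto
    show False using 1 2 lexless_asym by blast
  qed
qed

lemma indep_good:
  fixes c :: "(nat \<Rightarrow> nat) \<Rightarrow> 'a::comm_ring_1"
  assumes sum0: "(\<Sum>\<tau>\<in>{\<tau>\<in>perms r. good n r \<tau>}. mscale (c \<tau>) (Phi n r \<tau>)) = 0"
  shows "\<forall>\<tau>\<in>{\<tau>\<in>perms r. good n r \<tau>}. c \<tau> = 0"
proof (rule ccontr)
  define G where "G = {\<tau>\<in>perms r. good n r \<tau>}"
  have finG: "finite G" unfolding G_def using perms_finite by auto
  assume "\<not> (\<forall>\<tau>\<in>{\<tau>\<in>perms r. good n r \<tau>}. c \<tau> = 0)"
  then obtain \<tau>0 where "\<tau>0 \<in> G" "c \<tau>0 \<noteq> 0" unfolding G_def by auto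
  then obtain \<sigma> where \<sigma>: "\<sigma> \<in> G \<and> c \<sigma> \<noteq> 0"
    and min: "\<forall>\<tau>. \<tau> \<in> G \<and> c \<tau> \<noteq> 0 \<longrightarrow> card {\<rho>\<in>perms r. lexless r \<rho> \<sigma>} \<le> card {\<rho>\<in>perms r. lexless r \<rho> \<tau>}"
    using ex_has_least_nat[of "\<lambda>\<tau>. \<tau> \<in> G \<and> c \<tau> \<noteq> 0" \<tau>0 "\<lambda>\<tau>. card {\<rho>\<in>perms r. lexless r \<rho> \<tau>}"]
    by blast
  have sG: "\<sigma> \<in> perms r" "good n r \<sigma>" using \<sigma> unfolding G_def by auto
  have others: "c \<tau> * (Phi n r \<tau> (place_perm \<sigma> (cw \<sigma> r)) (cw \<sigma> r) :: 'a) = 0"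
    if "\<tau> \<in> G" "\<tau> \<noteq> \<sigma>" for \<tau>
  proof (cases "c \<tau> = 0")
    case False
    have tp: "\<tau> \<in> perms r" using that unfolding G_def by auto
    have "\<not> lexless r \<tau> \<sigma>"
    proof
      assume lx: "lexless r \<tau> \<sigma>"
      have "{\<rho>\<in>perms r. lexless r \<rho> \<tau>} \<subset> {\<rho>\<in>perms r. lexless r \<rho> \<sigma>}"
        using lx tp lexless_trans lexless_irrefl by blast
      then have "card {\<rho>\<in>perms r. lexless r \<rho> \<tau>} < card {\<rho>\<in>perms r. lexless r \<rho> \<sigma>}"
        using perms_finite by (intro psubset_card_mono) auto
      then show False using min that(1) False by fastforce
    qed
    then have "(Phi n r \<tau> (place_perm \<sigma> (cw \<sigma> r)) (cw \<sigma> r) :: 'a) = 0"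
      using triang[OF sG tp] that(2) by blast
    then show ?thesis by simp
  qed simp
  have "0 = (\<Sum>\<tau>\<in>G. mscale (c \<tau>) (Phi n r \<tau>)) (place_perm \<sigma> (cw \<sigma> r)) (cw \<sigma> r)"
    using sum0 unfolding G_def by simp
  also have "\<dots> = (\<Sum>\<tau>\<in>G. c \<tau> * (Phi n r \<tau> (place_perm \<sigma> (cw \<sigma> r)) (cw \<sigma> r) :: 'a))"
    by (simp add: sum_fun_app2 mscale_def)
  also have "\<dots> = c \<sigma> * (Phi n r \<sigma> (place_perm \<sigma> (cw \<sigma> r)) (cw \<sigma> r) :: 'a)"
  proof -
    have sG': "\<sigma> \<in> G" using \<sigma> by blast
    have "(\<Sum>\<tau>\<in>G - {\<sigma>}. c \<tau> * (Phi n r \<tau> (place_perm \<sigma> (cw \<sigma> r)) (cw \<sigma> r) :: 'a)) = 0"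
      using others by (intro sum.neutral) blast
    then show ?thesis using sum.remove[OF finG sG', of "\<lambda>\<tau>. c \<tau> * (Phi n r \<tau> (place_perm \<sigma> (cw \<sigma> r)) (cw \<sigma> r) :: 'a)"]
      by simp
  qed
  also have "\<dots> = c \<sigma>" using diag[OF sG, where 'a='a] by simp
  finally show False using \<sigma> by simp
qed

lemma free_main:
  "free_of_rank (module.span mscale ((Phi n r :: _ \<Rightarrow> _ \<Rightarrow> _ \<Rightarrow> 'a::comm_ring_1) ` {\<sigma>. \<sigma> permutes {..<r}}))
     (card {\<tau>\<in>perms r. good n r \<tau>})"
proof -
  define G where "G = {\<tau>\<in>perms r. good n r \<tau>}"
  define B where "B = (Phi n r :: _ \<Rightarrow> _ \<Rightarrow> _ \<Rightarrow> 'a) ` G"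
  have finG: "finite G" unfolding G_def using perms_finite by auto
  have inj: "inj_on (Phi n r :: _ \<Rightarrow> _ \<Rightarrow> _ \<Rightarrow> 'a) G" unfolding G_def by (rule Phi_inj_good)
  have Pe: "{\<sigma>. \<sigma> permutes {..<r}} = perms r" by (simp add: perms_def)
  have spaneq: "M.span ((Phi n r :: _ \<Rightarrow> _ \<Rightarrow> _ \<Rightarrow> 'a) ` perms r) = M.span B"
  proof
    show "M.span ((Phi n r :: _ \<Rightarrow> _ \<Rightarrow> _ \<Rightarrow> 'a) ` perms r) \<subseteq> M.span B"
    proof (rule M.span_minimal)
      show "(Phi n r :: _ \<Rightarrow> _ \<Rightarrow> _ \<Rightarrow> 'a) ` perms r \<subseteq> M.span B"
        unfolding B_def G_def using span_good by blast
    qed simp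
    show "M.span B \<subseteq> M.span ((Phi n r :: _ \<Rightarrow> _ \<Rightarrow> _ \<Rightarrow> 'a) ` perms r)"
      unfolding B_def G_def by (rule M.span_mono) auto
  qed
  have indep: "\<not> M.dependent B"
  proof
    assume "M.dependent B"
    moreover have "finite B" unfolding B_def using finG by simp
    ultimately obtain u where u: "\<exists>v\<in>B. u v \<noteq> 0" "(\<Sum>v\<in>B. mscale (u v) v) = 0"
      using M.dependent_finite by blast
    have "(\<Sum>\<tau>\<in>G. mscale (u (Phi n r \<tau>)) (Phi n r \<tau> :: _ \<Rightarrow> _ \<Rightarrow> 'a)) = 0"
      using u(2) unfolding B_def by (simp add: sum.reindex[OF inj])
    then have "\<forall>\<tau>\<in>G. u (Phi n r \<tau>) = 0"
      unfolding G_def by (rule indep_good)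
    then show False using u(1) unfolding B_def by auto
  qed
  show ?thesis unfolding free_of_rank_def Pe
    apply (rule exI[of _ B])
    using finG inj indep spaneq M.span_superset[of B]
    by (auto simp: B_def G_def card_image)
qed

definition young :: "(nat \<times> nat) set \<Rightarrow> bool" where
  "young D \<longleftrightarrow> finite D \<and> (\<forall>i j i' j'. (i, j) \<in> D \<longrightarrow> i' \<le> i \<longrightarrow> j' \<le> j \<longrightarrow> (i', j') \<in> D)"

lemma youngD: "young D \<Longrightarrow> (i, j) \<in> D \<Longrightarrow> i' \<le> i \<Longrightarrow> j' \<le> j \<Longrightarrow> (i', j') \<in> D"
  unfolding young_def by blast

lemma young_finite: "young D \<Longrightarrow> finite D"
  unfolding young_def by blast

definition rowlen :: "(nat \<times> nat) set \<Rightarrow> nat \<Rightarrow> nat" where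
  "rowlen D k = (LEAST j. (k, j) \<notin> D)"

lemma finite_row_ex: "finite (D :: (nat \<times> nat) set) \<Longrightarrow> \<exists>j. (k, j) \<notin> D"
proof (rule ccontr)
  assume fin: "finite D" and "\<not> (\<exists>j. (k, j) \<notin> D)"
  then have sub: "range (Pair k) \<subseteq> D" by auto
  have f: "finite (range (Pair k :: nat \<Rightarrow> nat \<times> nat))" by (rule finite_subset[OF sub fin])
  have "inj (Pair k :: nat \<Rightarrow> nat \<times> nat)" by (auto simp: inj_def)
  then have "finite (UNIV :: nat set)" using finite_imageD[OF f] by blast
  then show False by simp
qed

lemma young_row: "young D \<Longrightarrow> (k, j) \<in> D \<longleftrightarrow> j < rowlen D k"
proof
  assume y: "young D"
  have ex: "\<exists>j. (k, j) \<notin> D" using finite_row_ex[OF young_finite[OF y]] .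
  have nin: "(k, rowlen D k) \<notin> D" unfolding rowlen_def using LeastI_ex[OF ex] .
  {
    assume "(k, j) \<in> D"
    show "j < rowlen D k"
    proof (rule ccontr)
      assume "\<not> j < rowlen D k"
      then have "(k, rowlen D k) \<in> D" using youngD[OF y \<open>(k, j) \<in> D\<close>, of k "rowlen D k"] by simp
      then show False using nin by simp
    qed
  }
  {
    assume "j < rowlen D k"
    then show "(k, j) \<in> D" unfolding rowlen_def using not_less_Least by blast
  }
qed

lemma rowlen_eqI:
  assumes "young D" "\<And>j. (k, j) \<in> D \<longleftrightarrow> j < m"
  shows "rowlen D k = m"
proof -
  have "\<And>j. j < rowlen D k \<longleftrightarrow> j < m" using young_row[OF assms(1)] assms(2) by blast
  then show ?thesis by (metis less_irrefl linorder_neqE_nat)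
qed

lemma rowlen_mono:
  assumes "young D" "k \<le> k'"
  shows "rowlen D k' \<le> rowlen D k"
proof (rule ccontr)
  assume "\<not> rowlen D k' \<le> rowlen D k"
  then have "(k', rowlen D k) \<in> D" using young_row[OF assms(1)] by simp
  then have "(k, rowlen D k) \<in> D" using youngD[OF assms(1)] assms(2) by blast
  then show False using young_row[OF assms(1)] by simp
qed

definition addrow :: "(nat \<times> nat) set \<Rightarrow> nat \<Rightarrow> (nat \<times> nat) set" where
  "addrow D k = insert (k, rowlen D k) D"

lemma addrow_notin: "young D \<Longrightarrow> (k, rowlen D k) \<notin> D"
  using young_row by blast

lemma addrow_young:
  assumes y: "young D" and c: "k = 0 \<or> rowlen D k < rowlen D (k - 1)"
  shows "young (addrow D k)"
  unfolding young_def addrow_def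
proof (intro conjI allI impI)
  show "finite (insert (k, rowlen D k) D)" using young_finite[OF y] by simp
  fix i j i' j'
  assume ij: "(i, j) \<in> insert (k, rowlen D k) D" and le: "i' \<le> i" "j' \<le> j"
  show "(i', j') \<in> insert (k, rowlen D k) D"
  proof (cases "(i, j) \<in> D")
    case True then show ?thesis using youngD[OF y True le] by simp
  next
    case False
    then have ij': "i = k" "j = rowlen D k" using ij by auto
    show ?thesis
    proof (cases "(i', j') = (k, rowlen D k)")
      case True then show ?thesis by simp
    next
      case False
      show ?thesis
      proof (cases "i' = k")
        case True
        then have "j' < rowlen D k" using False le ij' by auto
        then show ?thesis using young_row[OF y] True by simp
      next
        case False
        then have "i' < k" using le ij' by auto
        then have "k \<noteq> 0" by simp
        then have "rowlen D k < rowlen D (k - 1)" using c by simp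
        moreover have "rowlen D (k - 1) \<le> rowlen D i'" using rowlen_mono[OF y] \<open>i' < k\<close> by simp
        ultimately have "j' < rowlen D i'" using le ij' by simp
        then show ?thesis using young_row[OF y] by simp
      qed
    qed
  qed
qed

definition step :: "(nat \<times> nat) set \<Rightarrow> (nat \<times> nat) set \<Rightarrow> bool" where
  "step \<nu> \<mu> \<longleftrightarrow> \<mu> = \<nu> \<or> (\<exists>a. a \<notin> \<nu> \<and> \<mu> = insert a \<nu>)"

definition loc :: "(nat \<times> nat) set \<Rightarrow> (nat \<times> nat) set \<Rightarrow> (nat \<times> nat) set \<Rightarrow> bool \<Rightarrow> (nat \<times> nat) set" where
  "loc \<nu> \<mu> \<eta> x = (if \<mu> \<noteq> \<eta> then \<mu> \<union> \<eta>
     else if \<mu> \<noteq> \<nu> then addrow \<mu> (Suc (fst (the_elem (\<mu> - \<nu>))))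
     else if x then addrow \<mu> 0 else \<mu>)"

definition cellok :: "(nat \<times> nat) set \<Rightarrow> (nat \<times> nat) set \<Rightarrow> (nat \<times> nat) set \<Rightarrow> bool \<Rightarrow> bool" where
  "cellok \<nu> \<mu> \<eta> x \<longleftrightarrow> young \<nu> \<and> young \<mu> \<and> young \<eta> \<and> step \<nu> \<mu> \<and> step \<nu> \<eta> \<and> (x \<longrightarrow> \<mu> = \<nu> \<and> \<eta> = \<nu>)"

lemma young_Un: "young A \<Longrightarrow> young B \<Longrightarrow> young (A \<union> B)"
  unfolding young_def by blast

lemma young_Int: "young A \<Longrightarrow> young B \<Longrightarrow> young (A \<inter> B)"
  unfolding young_def by blast

lemma insert_cell:
  assumes y1: "young \<nu>" and y2: "young (insert (k, l) \<nu>)" and nin: "(k, l) \<notin> \<nu>"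
  shows "rowlen \<nu> k = l" "rowlen (insert (k, l) \<nu>) k = Suc l"
    "\<And>k'. k' \<noteq> k \<Longrightarrow> rowlen (insert (k, l) \<nu>) k' = rowlen \<nu> k'"
proof -
  have A: "(k, j) \<in> \<nu> \<longleftrightarrow> j < l" for j
  proof
    assume "(k, j) \<in> \<nu>"
    show "j < l"
    proof (rule ccontr)
      assume "\<not> j < l"
      then have "(k, l) \<in> \<nu>" using youngD[OF y1 \<open>(k, j) \<in> \<nu>\<close>, of k l] by simp
      then show False using nin by simp
    qed
  next
    assume "j < l"
    then have "(k, j) \<in> insert (k, l) \<nu>" using youngD[OF y2, of k l k j] by simp
    then show "(k, j) \<in> \<nu>" using \<open>j < l\<close> by auto
  qed
  show "rowlen \<nu> k = l" by (rule rowlen_eqI[OF y1 A])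
  show "rowlen (insert (k, l) \<nu>) k = Suc l"
    by (rule rowlen_eqI[OF y2]) (auto simp: A)
  fix k' assume "k' \<noteq> k"
  show "rowlen (insert (k, l) \<nu>) k' = rowlen \<nu> k'"
    by (rule rowlen_eqI[OF y2]) (use \<open>k' \<noteq> k\<close> young_row[OF y1] in auto)
qed

lemma cellok_cases:
  assumes "cellok \<nu> \<mu> \<eta> x"
  obtains (C1) "\<mu> \<noteq> \<eta>" "\<not> x"
    | (C2) a where "\<mu> = \<eta>" "a \<notin> \<nu>" "\<mu> = insert a \<nu>" "\<not> x"
    | (C3) "\<mu> = \<eta>" "\<mu> = \<nu>"
  using assms unfolding cellok_def step_def by blast

lemma card_insert_young: "young \<nu> \<Longrightarrow> a \<notin> \<nu> \<Longrightarrow> card (insert a \<nu>) = Suc (card \<nu>)"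
  using young_finite by simp

lemma loc_props:
  assumes ok: "cellok \<nu> \<mu> \<eta> x"
  defines "\<rho> \<equiv> loc \<nu> \<mu> \<eta> x"
  shows "young \<rho>" "step \<mu> \<rho>" "step \<eta> \<rho>"
    "card \<rho> + card \<nu> = card \<mu> + card \<eta> + (if x then 1 else 0)"
    "rowlen \<rho> 0 = (if x then Suc (rowlen \<nu> 0) else max (rowlen \<mu> 0) (rowlen \<eta> 0))"
proof -
  have yn: "young \<nu>" and ym: "young \<mu>" and yl: "young \<eta>" and sm: "step \<nu> \<mu>" and sl: "step \<nu> \<eta>"
    using ok unfolding cellok_def by auto
  have "young \<rho> \<and> step \<mu> \<rho> \<and> step \<eta> \<rho> \<and>
    card \<rho> + card \<nu> = card \<mu> + card \<eta> + (if x then 1 else 0) \<and>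
    rowlen \<rho> 0 = (if x then Suc (rowlen \<nu> 0) else max (rowlen \<mu> 0) (rowlen \<eta> 0))"
  using ok proof (cases rule: cellok_cases)
    case C1
    have r: "\<rho> = \<mu> \<union> \<eta>" unfolding \<rho>_def loc_def using C1 by simp
    have yr: "young \<rho>" unfolding r using ym yl by (rule young_Un)
    have int: "\<mu> \<inter> \<eta> = \<nu>" and st: "step \<mu> \<rho> \<and> step \<eta> \<rho>"
      using sm sl C1 unfolding r step_def by blast+
    have fin: "finite \<mu>" "finite \<eta>" using ym yl young_finite by auto
    have "card \<rho> + card \<nu> = card \<mu> + card \<eta>"
      unfolding r using card_Un_Int[OF fin] int by simp
    moreover have "rowlen \<rho> 0 = max (rowlen \<mu> 0) (rowlen \<eta> 0)"
      by (rule rowlen_eqI[OF yr]) (auto simp: r young_row[OF ym] young_row[OF yl])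
    ultimately show ?thesis using yr st C1 by simp
  next
    case (C2 a)
    obtain k l where a: "a = (k, l)" by (cases a)
    have "\<mu> - \<nu> = {a}" using C2 by auto
    then have te: "the_elem (\<mu> - \<nu>) = a" by simp
    have r: "\<rho> = addrow \<mu> (Suc k)" unfolding \<rho>_def loc_def using C2 te a by auto
    have ym': "young (insert (k, l) \<nu>)" using ym C2 a by simp
    have ic: "rowlen \<nu> k = l" "rowlen \<mu> k = Suc l" "rowlen \<mu> (Suc k) = rowlen \<nu> (Suc k)"
      using insert_cell[OF yn ym'] C2 a by auto
    have "rowlen \<mu> (Suc k) < rowlen \<mu> (Suc k - 1)"
      using ic rowlen_mono[OF yn, of k "Suc k"] by simp
    then have yr: "young \<rho>" unfolding r using addrow_young[OF ym] by blast
    have ni: "(Suc k, rowlen \<mu> (Suc k)) \<notin> \<mu>" using addrow_notin[OF ym] .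
    have st: "step \<mu> \<rho>" unfolding r addrow_def step_def using ni by blast
    have c1: "card \<rho> = Suc (card \<mu>)" unfolding r addrow_def using card_insert_young[OF ym ni] .
    have c2: "card \<mu> = Suc (card \<nu>)" using C2(2,3) card_insert_young[OF yn C2(2)] by simp
    have "rowlen \<rho> 0 = rowlen \<mu> 0"
      by (rule rowlen_eqI[OF yr]) (auto simp: r addrow_def young_row[OF ym])
    then show ?thesis using yr st c1 c2 C2 by simp
  next
    case C3
    show ?thesis
    proof (cases x)
      case True
      have r: "\<rho> = addrow \<mu> 0" unfolding \<rho>_def loc_def using C3 True by simp
      have yr: "young \<rho>" unfolding r using addrow_young[OF ym] by blast
      have ni: "(0, rowlen \<mu> 0) \<notin> \<mu>" using addrow_notin[OF ym] .
      have st: "step \<mu> \<rho>" unfolding r addrow_def step_def using ni by blast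
      have c1: "card \<rho> = Suc (card \<mu>)" unfolding r addrow_def using card_insert_young[OF ym ni] .
      have "rowlen \<rho> 0 = Suc (rowlen \<mu> 0)"
        by (rule rowlen_eqI[OF yr]) (auto simp: r addrow_def young_row[OF ym])
      then show ?thesis using yr st c1 C3 True by simp
    next
      case False
      have r: "\<rho> = \<mu>" unfolding \<rho>_def loc_def using C3 False by simp
      then show ?thesis using ym C3 False by (simp add: step_def)
    qed
  qed
  then show "young \<rho>" "step \<mu> \<rho>" "step \<eta> \<rho>"
    "card \<rho> + card \<nu> = card \<mu> + card \<eta> + (if x then 1 else 0)"
    "rowlen \<rho> 0 = (if x then Suc (rowlen \<nu> 0) else max (rowlen \<mu> 0) (rowlen \<eta> 0))"
    by auto
qed

lemma cellok_C1_int: "cellok \<nu> \<mu> \<eta> x \<Longrightarrow> \<mu> \<noteq> \<eta> \<Longrightarrow> \<nu> = \<mu> \<inter> \<eta>"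
  unfolding cellok_def step_def by blast

lemma addrow_ne: "young \<mu> \<Longrightarrow> addrow \<mu> k \<noteq> \<mu>"
  using addrow_notin unfolding addrow_def by blast

lemma addrow_inj: "young \<mu> \<Longrightarrow> addrow \<mu> k = addrow \<mu> k' \<Longrightarrow> k = k'"
proof -
  assume y: "young \<mu>" and e: "addrow \<mu> k = addrow \<mu> k'"
  have "(k, rowlen \<mu> k) \<in> addrow \<mu> k'" using e unfolding addrow_def by auto
  then show "k = k'" using addrow_notin[OF y, of k] unfolding addrow_def by auto
qed

lemma loc_C2:
  assumes "cellok \<nu> \<mu> \<eta> x" "\<mu> = \<eta>" "a \<notin> \<nu>" "\<mu> = insert a \<nu>"
  shows "loc \<nu> \<mu> \<eta> x = addrow \<mu> (Suc (fst a))"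
proof -
  have "\<mu> - \<nu> = {a}" using assms by auto
  then show ?thesis unfolding loc_def using assms by auto
qed

lemma loc_unique:
  assumes ok1: "cellok \<nu> \<mu> \<eta> x" and ok2: "cellok \<nu>' \<mu> \<eta> x'"
    and eq: "loc \<nu> \<mu> \<eta> x = loc \<nu>' \<mu> \<eta> x'"
  shows "\<nu> = \<nu>' \<and> x = x'"
proof (cases "\<mu> = \<eta>")
  case False
  then show ?thesis using cellok_C1_int[OF ok1 False] cellok_C1_int[OF ok2 False] ok1 ok2
    unfolding cellok_def by auto
next
  case True
  have ym: "young \<mu>" and yn: "young \<nu>" and yn': "young \<nu>'" using ok1 ok2 unfolding cellok_def by auto
  show ?thesis
  using ok1 proof (cases rule: cellok_cases)
    case C1 then show ?thesis using True by simp
  next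
    case (C2 a)
    have l1: "loc \<nu> \<mu> \<eta> x = addrow \<mu> (Suc (fst a))" using loc_C2[OF ok1 True C2(2,3)] .
    show ?thesis
    using ok2 proof (cases rule: cellok_cases)
      case C1 then show ?thesis using True by simp
    next
      case (C2 b)
      have l2: "loc \<nu>' \<mu> \<eta> x' = addrow \<mu> (Suc (fst b))" using loc_C2[OF ok2 True C2(2,3)] .
      have "addrow \<mu> (Suc (fst a)) = addrow \<mu> (Suc (fst b))" using eq l1 l2 by simp
      then have "Suc (fst a) = Suc (fst b)" by (rule addrow_inj[OF ym])
      then have "fst a = fst b" by simp
      obtain k l where a: "a = (k, l)" by (cases a)
      obtain k' l' where b: "b = (k', l')" by (cases b)
      have kk: "k = k'" using \<open>fst a = fst b\<close> a b by simp
      have "rowlen \<mu> k = Suc l"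
        using insert_cell(2)[of \<nu> k l] yn ym \<open>a \<notin> \<nu>\<close> \<open>\<mu> = insert a \<nu>\<close> a by simp
      moreover have "rowlen \<mu> k' = Suc l'"
        using insert_cell(2)[of \<nu>' k' l'] yn' ym C2 b by simp
      ultimately have "a = b" using a b kk by simp
      then have "\<nu> = \<nu>'"
        using \<open>a \<notin> \<nu>\<close> \<open>\<mu> = insert a \<nu>\<close> C2 by (metis Diff_insert_absorb)
      then show ?thesis using \<open>\<not> x\<close> C2 by simp
    next
      case C3
      have "loc \<nu>' \<mu> \<eta> x' = (if x' then addrow \<mu> 0 else \<mu>)" unfolding loc_def using C3 by simp
      then show ?thesis using eq l1 addrow_inj[OF ym, of "Suc (fst a)" 0] addrow_ne[OF ym]
        by (cases x') auto
    qed
  next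
    case C3
    have l1: "loc \<nu> \<mu> \<eta> x = (if x then addrow \<mu> 0 else \<mu>)" unfolding loc_def using C3 by simp
    show ?thesis
    using ok2 proof (cases rule: cellok_cases)
      case C1 then show ?thesis using True by simp
    next
      case (C2 b)
      have l2: "loc \<nu>' \<mu> \<eta> x' = addrow \<mu> (Suc (fst b))" using loc_C2[OF ok2 True C2(2,3)] .
      then show ?thesis using eq l1 addrow_inj[OF ym, of "Suc (fst b)" 0] addrow_ne[OF ym]
        by (cases x) auto
    next
      case C3': C3
      have l2: "loc \<nu>' \<mu> \<eta> x' = (if x' then addrow \<mu> 0 else \<mu>)" unfolding loc_def using C3' by simp
      have ne: "\<mu> \<noteq> addrow \<mu> 0" using addrow_ne[OF ym, of 0] by metis
      have "x = x'" using eq l1 l2 ne by (cases x; cases x') auto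
      then show ?thesis using C3 C3' by simp
    qed
  qed
qed

lemma loc_exists:
  assumes ym: "young \<mu>" and yn: "young \<eta>" and yr: "young \<rho>"
    and s1: "step \<mu> \<rho>" and s2: "step \<eta> \<rho>"
  shows "\<exists>\<nu> x. cellok \<nu> \<mu> \<eta> x \<and> loc \<nu> \<mu> \<eta> x = \<rho>"
proof (cases "\<mu> = \<eta>")
  case False
  define \<nu> where "\<nu> = \<mu> \<inter> \<eta>"
  have yv: "young \<nu>" unfolding \<nu>_def using ym yn by (rule young_Int)
  have st: "step \<nu> \<mu> \<and> step \<nu> \<eta> \<and> \<mu> \<union> \<eta> = \<rho>"
  proof (cases "\<rho> = \<mu>")
    case True
    then have "\<rho> \<noteq> \<eta>" using False by simp
    then obtain b where b: "b \<notin> \<eta>" "\<rho> = insert b \<eta>" using s2 unfolding step_def by blast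
    then have "\<nu> = \<eta>" unfolding \<nu>_def using True by auto
    then show ?thesis unfolding step_def using b True by auto
  next
    case F1: False
    then obtain a where a: "a \<notin> \<mu>" "\<rho> = insert a \<mu>" using s1 unfolding step_def by blast
    show ?thesis
    proof (cases "\<rho> = \<eta>")
      case True
      then have "\<nu> = \<mu>" unfolding \<nu>_def using a by auto
      then show ?thesis unfolding step_def using a True by auto
    next
      case F2: False
      then obtain b where b: "b \<notin> \<eta>" "\<rho> = insert b \<eta>" using s2 unfolding step_def by blast
      have ab: "a \<noteq> b"
      proof
        assume "a = b"
        then have "\<mu> = \<eta>" using a b by (metis Diff_insert_absorb)
        then show False using False by simp
      qed
      have m: "\<mu> = insert b \<nu>" "b \<notin> \<nu>" unfolding \<nu>_def using a b ab by auto
      have e: "\<eta> = insert a \<nu>" "a \<notin> \<nu>" unfolding \<nu>_def using a b ab by auto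
      show ?thesis unfolding step_def using m e a by auto
    qed
  qed
  then have un: "\<mu> \<union> \<eta> = \<rho>" and st: "step \<nu> \<mu>" "step \<nu> \<eta>" by auto
  have "cellok \<nu> \<mu> \<eta> False" unfolding cellok_def using yv ym yn st by simp
  moreover have "loc \<nu> \<mu> \<eta> False = \<rho>" unfolding loc_def using False un by simp
  ultimately show ?thesis by blast
next
  case True
  show ?thesis
  proof (cases "\<rho> = \<mu>")
    case True
    have "cellok \<mu> \<mu> \<eta> False" unfolding cellok_def using ym yn \<open>\<mu> = \<eta>\<close> by (simp add: step_def)
    moreover have "loc \<mu> \<mu> \<eta> False = \<rho>" unfolding loc_def using \<open>\<mu> = \<eta>\<close> True by simp
    ultimately show ?thesis by blast
  next
    case False
    then obtain k l where kl: "(k, l) \<notin> \<mu>" "\<rho> = insert (k, l) \<mu>" using s1 unfolding step_def by auto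
    have ic: "rowlen \<mu> k = l" using insert_cell(1)[of \<mu> k l] ym yr kl by simp
    show ?thesis
    proof (cases k)
      case 0
      have "cellok \<mu> \<mu> \<eta> True" unfolding cellok_def using ym yn \<open>\<mu> = \<eta>\<close> by (simp add: step_def)
      moreover have "loc \<mu> \<mu> \<eta> True = \<rho>" unfolding loc_def addrow_def using \<open>\<mu> = \<eta>\<close> kl ic 0 by simp
      ultimately show ?thesis by blast
    next
      case (Suc k0)
      have "(k0, l) \<in> \<rho>" using youngD[OF yr, of k l k0 l] kl Suc by simp
      then have "(k0, l) \<in> \<mu>" using kl Suc by auto
      then have lt: "l < rowlen \<mu> k0" using young_row[OF ym] by simp
      define m where "m = rowlen \<mu> k0 - 1"
      have lm: "l \<le> m" "rowlen \<mu> k0 = Suc m" using lt unfolding m_def by auto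
      define c where "c = (k0, m)"
      have cin: "c \<in> \<mu>" unfolding c_def using young_row[OF ym] lm by simp
      define \<nu> where "\<nu> = \<mu> - {c}"
      have yv: "young \<nu>"
        unfolding young_def
      proof (intro conjI allI impI)
        show "finite \<nu>" unfolding \<nu>_def using young_finite[OF ym] by simp
        fix i j i' j' assume ij: "(i, j) \<in> \<nu>" and le: "i' \<le> i" "j' \<le> j"
        have ijm: "(i, j) \<in> \<mu>" "(i, j) \<noteq> c" using ij unfolding \<nu>_def by auto
        have "(i', j') \<in> \<mu>" using youngD[OF ym ijm(1) le] .
        moreover have "(i', j') \<noteq> c"
        proof
          assume "(i', j') = c"
          then have i'j': "i' = k0" "j' = m" unfolding c_def by auto
          show False
          proof (cases "i = k0")
            case True
            then have "j \<noteq> m" using ijm(2) unfolding c_def by auto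
            then have "m < j" using le i'j' by simp
            moreover have "j < rowlen \<mu> k0" using ijm(1) young_row[OF ym] True by simp
            ultimately show False using lm by simp
          next
            case False
            then have "k < i + 1" using le i'j' Suc by simp
            then have "(k, m) \<in> \<mu>" using youngD[OF ym ijm(1), of k m] le i'j' Suc by simp
            then have "m < rowlen \<mu> k" using young_row[OF ym] by simp
            then show False using ic lm by simp
          qed
        qed
        ultimately show "(i', j') \<in> \<nu>" unfolding \<nu>_def by simp
      qed
      have mu: "\<mu> = insert c \<nu>" "c \<notin> \<nu>" unfolding \<nu>_def using cin by auto
      have "cellok \<nu> \<mu> \<eta> False" unfolding cellok_def step_def using yv ym yn mu \<open>\<mu> = \<eta>\<close> by blast
      moreover have "loc \<nu> \<mu> \<eta> False = \<rho>"
      proof -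
        have "loc \<nu> \<mu> \<eta> False = addrow \<mu> (Suc (fst c))"
          by (rule loc_C2[OF calculation \<open>\<mu> = \<eta>\<close> mu(2,1)])
        also have "\<dots> = \<rho>" unfolding addrow_def c_def using kl ic Suc by simp
        finally show ?thesis .
      qed
      ultimately show ?thesis by blast
    qed
  qed
qed

fun grow :: "(nat \<Rightarrow> nat) \<Rightarrow> nat \<Rightarrow> nat \<Rightarrow> (nat \<times> nat) set" where
  "grow \<sigma> 0 j = {}"
| "grow \<sigma> (Suc i) 0 = {}"
| "grow \<sigma> (Suc i) (Suc j) = loc (grow \<sigma> i j) (grow \<sigma> (Suc i) j) (grow \<sigma> i (Suc j)) (\<sigma> i = j)"

lemma grow_0_right [simp]: "grow \<sigma> i 0 = {}"
  by (cases i) auto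

definition AA :: "(nat \<Rightarrow> nat) \<Rightarrow> nat \<Rightarrow> nat \<Rightarrow> nat set" where
  "AA \<sigma> i j = {a. a < i \<and> \<sigma> a < j}"

definition NN :: "(nat \<Rightarrow> nat) \<Rightarrow> nat \<Rightarrow> nat \<Rightarrow> nat" where
  "NN \<sigma> i j = card (AA \<sigma> i j)"

definition FF :: "(nat \<Rightarrow> nat) \<Rightarrow> nat \<Rightarrow> nat \<Rightarrow> nat set set" where
  "FF \<sigma> i j = {S. S \<subseteq> AA \<sigma> i j \<and> incr \<sigma> S}"

definition LL :: "(nat \<Rightarrow> nat) \<Rightarrow> nat \<Rightarrow> nat \<Rightarrow> nat" where
  "LL \<sigma> i j = Max (card ` FF \<sigma> i j)"

lemma AA_finite: "finite (AA \<sigma> i j)"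
  unfolding AA_def by (rule finite_subset[of _ "{..<i}"]) auto

lemma FF_finite: "finite (FF \<sigma> i j)"
  unfolding FF_def by (rule finite_subset[of _ "Pow (AA \<sigma> i j)"]) (auto simp: AA_finite)

lemma FF_empty: "{} \<in> FF \<sigma> i j"
  unfolding FF_def incr_def by simp

lemma Max_card_eqI:
  assumes "finite F" "\<And>S. S \<in> F \<Longrightarrow> card S \<le> m" "S0 \<in> F" "card S0 = m"
  shows "Max (card ` F) = m"
proof (rule antisym)
  show "Max (card ` F) \<le> m" using assms(1,2,3) by (subst Max_le_iff) auto
  show "m \<le> Max (card ` F)" using assms(1,3,4) by (intro Max_ge) auto
qed

lemma LL_eqI:
  assumes "\<And>S. S \<in> FF \<sigma> i j \<Longrightarrow> card S \<le> m" "W \<in> FF \<sigma> i j" "card W = m"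
  shows "LL \<sigma> i j = m"
  unfolding LL_def using Max_card_eqI[OF FF_finite assms] .

lemma LL_witness: "\<exists>S\<in>FF \<sigma> i j. card S = LL \<sigma> i j"
proof -
  have "LL \<sigma> i j \<in> card ` FF \<sigma> i j" unfolding LL_def
    using FF_finite[of \<sigma> i j] FF_empty[of \<sigma> i j] by (intro Max_in) auto
  then show ?thesis by auto
qed

lemma LL_ge: "S \<in> FF \<sigma> i j \<Longrightarrow> card S \<le> LL \<sigma> i j"
  unfolding LL_def using FF_finite by (intro Max_ge) auto

lemma AA_Suc_i: "AA \<sigma> (Suc i) j = (if \<sigma> i < j then insert i (AA \<sigma> i j) else AA \<sigma> i j)"
  unfolding AA_def using less_Suc_eq by auto

lemma NN_Suc_i: "NN \<sigma> (Suc i) j = NN \<sigma> i j + (if \<sigma> i < j then 1 else 0)"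
proof -
  have "i \<notin> AA \<sigma> i j" unfolding AA_def by simp
  then show ?thesis unfolding NN_def AA_Suc_i using AA_finite by simp
qed

lemma NN_ident: "NN \<sigma> (Suc i) (Suc j) + NN \<sigma> i j = NN \<sigma> (Suc i) j + NN \<sigma> i (Suc j) + (if \<sigma> i = j then 1 else 0)"
  unfolding NN_Suc_i by auto

lemma NN_0 [simp]: "NN \<sigma> 0 j = 0" "NN \<sigma> i 0 = 0"
  unfolding NN_def AA_def by auto

lemma AA_0 [simp]: "AA \<sigma> 0 j = {}" "AA \<sigma> i 0 = {}"
  unfolding AA_def by auto

lemma LL_0 [simp]: "LL \<sigma> 0 j = 0" "LL \<sigma> i 0 = 0"
  unfolding LL_def FF_def incr_def by auto

lemma NN_inj_same:
  assumes "inj \<sigma>" "\<sigma> i = j"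
  shows "NN \<sigma> i (Suc j) = NN \<sigma> i j"
proof -
  have "AA \<sigma> i (Suc j) = AA \<sigma> i j"
  proof -
    have "\<sigma> a \<noteq> j" if "a < i" for a
      using assms that injD by fastforce
    then show ?thesis unfolding AA_def using less_Suc_eq by auto
  qed
  then show ?thesis unfolding NN_def by simp
qed

lemma LL_rec:
  assumes inj: "inj \<sigma>"
  shows "LL \<sigma> (Suc i) (Suc j) = (if \<sigma> i = j then Suc (LL \<sigma> i j) else max (LL \<sigma> (Suc i) j) (LL \<sigma> i (Suc j)))"
proof (cases "\<sigma> i = j")
  case True
  have nA: "\<sigma> a \<noteq> j" if "a < i" for a using inj True that injD by fastforce
  have A: "AA \<sigma> (Suc i) (Suc j) = insert i (AA \<sigma> i j)"
    unfolding AA_def using True nA less_Suc_eq by auto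
  obtain S0 where S0: "S0 \<in> FF \<sigma> i j" "card S0 = LL \<sigma> i j" using LL_witness by blast
  have finS0: "finite S0" using S0(1) AA_finite finite_subset unfolding FF_def by blast
  have iS0: "i \<notin> S0" using S0(1) unfolding FF_def AA_def by auto
  have "LL \<sigma> (Suc i) (Suc j) = Suc (LL \<sigma> i j)"
  proof (rule LL_eqI[where W="insert i S0"])
    show "card S \<le> Suc (LL \<sigma> i j)" if "S \<in> FF \<sigma> (Suc i) (Suc j)" for S
    proof -
      have "S - {i} \<in> FF \<sigma> i j" using that unfolding FF_def A incr_def by auto
      then have "card (S - {i}) \<le> LL \<sigma> i j" by (rule LL_ge)
      moreover have "card S \<le> Suc (card (S - {i}))"
      proof -
        have finS: "finite S" using that AA_finite finite_subset unfolding FF_def by blast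
        show ?thesis
        proof (cases "i \<in> S")
          case True then show ?thesis using card_Suc_Diff1[OF finS True] by simp
        qed simp
      qed
      ultimately show ?thesis by simp
    qed
    show "insert i S0 \<in> FF \<sigma> (Suc i) (Suc j)"
    proof -
      have sub: "S0 \<subseteq> AA \<sigma> i j" and inc: "incr \<sigma> S0" using S0(1) unfolding FF_def by auto
      have "incr \<sigma> (insert i S0)"
        unfolding incr_def
      proof (intro ballI impI)
        fix a b assume a: "a \<in> insert i S0" and b: "b \<in> insert i S0" and ab: "a < b"
        show "\<sigma> a < \<sigma> b"
        proof (cases "b = i")
          case True
          then have "a \<in> S0" using a ab by auto
          then show ?thesis using sub True \<open>\<sigma> i = j\<close> unfolding AA_def by auto
        next
          case False
          then have "b \<in> S0" using b by auto
          then have "b < i" using sub unfolding AA_def by auto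
          then have "a \<in> S0" using a ab by auto
          then show ?thesis using inc \<open>b \<in> S0\<close> ab unfolding incr_def by auto
        qed
      qed
      then show ?thesis unfolding FF_def A using sub by auto
    qed
    show "card (insert i S0) = Suc (LL \<sigma> i j)" using finS0 iS0 S0(2) by simp
  qed
  then show ?thesis using True by simp
next
  case False
  obtain S1 where S1: "S1 \<in> FF \<sigma> (Suc i) j" "card S1 = LL \<sigma> (Suc i) j" using LL_witness by blast
  obtain S2 where S2: "S2 \<in> FF \<sigma> i (Suc j)" "card S2 = LL \<sigma> i (Suc j)" using LL_witness by blast
  have sub1: "FF \<sigma> (Suc i) j \<subseteq> FF \<sigma> (Suc i) (Suc j)" unfolding FF_def AA_def by auto
  have sub2: "FF \<sigma> i (Suc j) \<subseteq> FF \<sigma> (Suc i) (Suc j)" unfolding FF_def AA_def by auto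
  have split: "S \<in> FF \<sigma> (Suc i) j \<or> S \<in> FF \<sigma> i (Suc j)" if S: "S \<in> FF \<sigma> (Suc i) (Suc j)" for S
  proof (cases "i \<in> S")
    case False
    then have "S \<subseteq> AA \<sigma> i (Suc j)" using S unfolding FF_def AA_def using less_Suc_eq by auto
    then show ?thesis using S unfolding FF_def by auto
  next
    case True
    have sub: "S \<subseteq> AA \<sigma> (Suc i) (Suc j)" and inc: "incr \<sigma> S" using S unfolding FF_def by auto
    have si: "\<sigma> i < j" using True sub False unfolding AA_def by auto
    have "\<sigma> a < j" if "a \<in> S" for a
    proof (cases "a = i")
      case True then show ?thesis using si by simp
    next
      case False
      then have "a < i" using that sub unfolding AA_def by auto
      then have "\<sigma> a < \<sigma> i" using inc that \<open>i \<in> S\<close> unfolding incr_def by auto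
      then show ?thesis using si by simp
    qed
    then have "S \<subseteq> AA \<sigma> (Suc i) j" using sub unfolding AA_def by auto
    then show ?thesis using inc unfolding FF_def by auto
  qed
  have "LL \<sigma> (Suc i) (Suc j) = max (LL \<sigma> (Suc i) j) (LL \<sigma> i (Suc j))"
  proof (cases "LL \<sigma> (Suc i) j \<le> LL \<sigma> i (Suc j)")
    case True
    show ?thesis
    proof (rule LL_eqI[where W="S2"])
        show "card S \<le> max (LL \<sigma> (Suc i) j) (LL \<sigma> i (Suc j))" if "S \<in> FF \<sigma> (Suc i) (Suc j)" for S
        using split[OF that] LL_ge[of S] by force
      show "S2 \<in> FF \<sigma> (Suc i) (Suc j)" using S2 sub2 by auto
      show "card S2 = max (LL \<sigma> (Suc i) j) (LL \<sigma> i (Suc j))" using S2 True by simp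
    qed
  next
    case False
    show ?thesis
    proof (rule LL_eqI[where W="S1"])
        show "card S \<le> max (LL \<sigma> (Suc i) j) (LL \<sigma> i (Suc j))" if "S \<in> FF \<sigma> (Suc i) (Suc j)" for S
        using split[OF that] LL_ge[of S] by force
      show "S1 \<in> FF \<sigma> (Suc i) (Suc j)" using S1 sub1 by auto
      show "card S1 = max (LL \<sigma> (Suc i) j) (LL \<sigma> i (Suc j))" using S1 False by simp
    qed
  qed
  then show ?thesis using False by simp
qed

lemma step_card_eq: "step \<nu> \<mu> \<Longrightarrow> finite \<nu> \<Longrightarrow> card \<mu> = card \<nu> \<Longrightarrow> \<mu> = \<nu>"
  unfolding step_def by auto

lemma young_empty: "young {}"
  unfolding young_def by simp

lemma rowlen_empty: "rowlen {} k = 0"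
  by (rule rowlen_eqI[OF young_empty]) simp

lemma grow_inv:
  assumes inj: "inj \<sigma>"
  shows "young (grow \<sigma> i j) \<and> card (grow \<sigma> i j) = NN \<sigma> i j \<and> rowlen (grow \<sigma> i j) 0 = LL \<sigma> i j
    \<and> (0 < i \<longrightarrow> step (grow \<sigma> (i - 1) j) (grow \<sigma> i j))
    \<and> (0 < j \<longrightarrow> step (grow \<sigma> i (j - 1)) (grow \<sigma> i j))"
proof (induction i arbitrary: j)
  case 0
  show ?case by (simp add: young_empty rowlen_empty step_def)
next
  case (Suc i)
  note outer = Suc.IH
  show ?case
  proof (induction j)
    case 0
    show ?case by (simp add: young_empty rowlen_empty step_def)
  next
    case (Suc j)
    define \<nu> where "\<nu> = grow \<sigma> i j"
    define \<mu> where "\<mu> = grow \<sigma> (Suc i) j"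
    define \<eta> where "\<eta> = grow \<sigma> i (Suc j)"
    have Rn: "young \<nu>" "card \<nu> = NN \<sigma> i j" "rowlen \<nu> 0 = LL \<sigma> i j"
      using outer[of j] unfolding \<nu>_def by auto
    have Rm: "young \<mu>" "card \<mu> = NN \<sigma> (Suc i) j" "rowlen \<mu> 0 = LL \<sigma> (Suc i) j" "step \<nu> \<mu>"
      using Suc.IH unfolding \<mu>_def \<nu>_def by auto
    have Re: "young \<eta>" "card \<eta> = NN \<sigma> i (Suc j)" "rowlen \<eta> 0 = LL \<sigma> i (Suc j)" "step \<nu> \<eta>"
      using outer[of "Suc j"] unfolding \<eta>_def \<nu>_def by auto
    have ok: "cellok \<nu> \<mu> \<eta> (\<sigma> i = j)"
      unfolding cellok_def
    proof (intro conjI impI)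
      assume x: "\<sigma> i = j"
      have "card \<mu> = card \<nu>" using Rm(2) Rn(2) x by (simp add: NN_Suc_i)
      then show "\<mu> = \<nu>" using step_card_eq[OF Rm(4) young_finite[OF Rn(1)]] by simp
      have "card \<eta> = card \<nu>" using Re(2) Rn(2) NN_inj_same[OF inj x] by simp
      then show "\<eta> = \<nu>" using step_card_eq[OF Re(4) young_finite[OF Rn(1)]] by simp
    qed (use Rn Rm Re in auto)
    have g: "grow \<sigma> (Suc i) (Suc j) = loc \<nu> \<mu> \<eta> (\<sigma> i = j)"
      unfolding \<nu>_def \<mu>_def \<eta>_def by simp
    note lp = loc_props[OF ok]
    have c: "card (grow \<sigma> (Suc i) (Suc j)) = NN \<sigma> (Suc i) (Suc j)"
      using lp(4) NN_ident[of \<sigma> i j] Rn(2) Rm(2) Re(2) unfolding g by simp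
    have r: "rowlen (grow \<sigma> (Suc i) (Suc j)) 0 = LL \<sigma> (Suc i) (Suc j)"
      using lp(5) LL_rec[OF inj, of i j] Rn(3) Rm(3) Re(3) unfolding g by simp
    have "grow \<sigma> (Suc i - 1) (Suc j) = \<eta>" "grow \<sigma> (Suc i) (Suc j - 1) = \<mu>"
      unfolding \<eta>_def \<mu>_def by simp_all
    then show ?case using lp(1,2,3) c r unfolding g by simp
  qed
qed

lemma grow_cellok:
  assumes inj: "inj \<sigma>"
  shows "cellok (grow \<sigma> i j) (grow \<sigma> (Suc i) j) (grow \<sigma> i (Suc j)) (\<sigma> i = j)"
proof -
  define \<nu> where "\<nu> = grow \<sigma> i j"
  define \<mu> where "\<mu> = grow \<sigma> (Suc i) j"
  define \<eta> where "\<eta> = grow \<sigma> i (Suc j)"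
  have Rn: "young \<nu>" "card \<nu> = NN \<sigma> i j"
    using grow_inv[OF inj, of i j] unfolding \<nu>_def by auto
  have Rm: "young \<mu>" "card \<mu> = NN \<sigma> (Suc i) j" "step \<nu> \<mu>"
    using grow_inv[OF inj, of "Suc i" j] unfolding \<mu>_def \<nu>_def by auto
  have Re: "young \<eta>" "card \<eta> = NN \<sigma> i (Suc j)" "step \<nu> \<eta>"
    using grow_inv[OF inj, of i "Suc j"] unfolding \<eta>_def \<nu>_def by auto
  have "cellok \<nu> \<mu> \<eta> (\<sigma> i = j)"
    unfolding cellok_def
  proof (intro conjI impI)
    assume x: "\<sigma> i = j"
    have "card \<mu> = card \<nu>" using Rm(2) Rn(2) x by (simp add: NN_Suc_i)
    then show "\<mu> = \<nu>" using step_card_eq[OF Rm(3) young_finite[OF Rn(1)]] by simp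
    have "card \<eta> = card \<nu>" using Re(2) Rn(2) NN_inj_same[OF inj x] by simp
    then show "\<eta> = \<nu>" using step_card_eq[OF Re(3) young_finite[OF Rn(1)]] by simp
  qed (use Rn Rm Re in auto)
  then show ?thesis unfolding \<nu>_def \<mu>_def \<eta>_def .
qed

definition tchains :: "nat \<Rightarrow> (nat \<times> nat) set \<Rightarrow> (nat \<Rightarrow> (nat \<times> nat) set) set" where
  "tchains r D = {t. t 0 = {} \<and> (\<forall>k. young (t k)) \<and> (\<forall>k<r. \<exists>a. a \<notin> t k \<and> t (Suc k) = insert a (t k)) \<and> (\<forall>k\<ge>r. t k = D)}"

definition topc :: "(nat \<Rightarrow> nat) \<Rightarrow> nat \<Rightarrow> nat \<Rightarrow> (nat \<times> nat) set" where
  "topc \<sigma> r = (\<lambda>k. grow \<sigma> (min k r) r)"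

definition rightc :: "(nat \<Rightarrow> nat) \<Rightarrow> nat \<Rightarrow> nat \<Rightarrow> (nat \<times> nat) set" where
  "rightc \<sigma> r = (\<lambda>k. grow \<sigma> r (min k r))"

lemma perms_inj: "\<sigma> \<in> perms r \<Longrightarrow> inj \<sigma>"
  unfolding perms_def using permutes_inj by blast

lemma NN_top: assumes "\<sigma> \<in> perms r" "k \<le> r" shows "NN \<sigma> k r = k"
proof -
  have "AA \<sigma> k r = {..<k}"
  proof -
    have "\<sigma> a < r" if "a < k" for a
      using assms that permutes_in_image[of \<sigma> "{..<r}" a] unfolding perms_def by auto
    then show ?thesis unfolding AA_def by auto
  qed
  then show ?thesis unfolding NN_def by simp
qed

lemma NN_right: assumes "\<sigma> \<in> perms r" "j \<le> r" shows "NN \<sigma> r j = j"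
proof -
  have sp: "\<sigma> permutes {..<r}" using assms(1) unfolding perms_def by simp
  have "\<sigma> ` AA \<sigma> r j = {..<j}"
  proof
    show "\<sigma> ` AA \<sigma> r j \<subseteq> {..<j}" unfolding AA_def by auto
    show "{..<j} \<subseteq> \<sigma> ` AA \<sigma> r j"
    proof
      fix b assume "b \<in> {..<j}"
      then have b: "b < j" by simp
      have "inv \<sigma> b < r" using permutes_in_image[OF permutes_inv[OF sp], of b] b assms(2) by simp
      moreover have "\<sigma> (inv \<sigma> b) = b" using permutes_inverses(1)[OF sp] .
      ultimately show "b \<in> \<sigma> ` AA \<sigma> r j" unfolding AA_def using b by (metis (mono_tags) image_eqI mem_Collect_eq)
    qed
  qed
  moreover have "inj_on \<sigma> (AA \<sigma> r j)" using perms_inj[OF assms(1)] by (simp add: inj_on_def inj_def)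
  ultimately show ?thesis unfolding NN_def by (metis card_image card_lessThan)
qed

lemma step_card_Suc: "step \<nu> \<mu> \<Longrightarrow> finite \<nu> \<Longrightarrow> card \<mu> = Suc (card \<nu>) \<Longrightarrow> \<exists>a. a \<notin> \<nu> \<and> \<mu> = insert a \<nu>"
  unfolding step_def by auto

lemma topc_chain: assumes "\<sigma> \<in> perms r" shows "topc \<sigma> r \<in> tchains r (grow \<sigma> r r)"
proof -
  have inj: "inj \<sigma>" using perms_inj[OF assms] .
  have "\<exists>a. a \<notin> grow \<sigma> k r \<and> grow \<sigma> (Suc k) r = insert a (grow \<sigma> k r)" if "k < r" for k
  proof (rule step_card_Suc)
    show "step (grow \<sigma> k r) (grow \<sigma> (Suc k) r)" using grow_inv[OF inj, of "Suc k" r] by simp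
    show "finite (grow \<sigma> k r)" using grow_inv[OF inj, of k r] young_finite by blast
    show "card (grow \<sigma> (Suc k) r) = Suc (card (grow \<sigma> k r))"
      using grow_inv[OF inj, of "Suc k" r] grow_inv[OF inj, of k r] NN_top[OF assms, of k] NN_top[OF assms, of "Suc k"] that
      by simp
  qed
  then show ?thesis unfolding tchains_def topc_def using grow_inv[OF inj] by auto
qed

lemma rightc_chain: assumes "\<sigma> \<in> perms r" shows "rightc \<sigma> r \<in> tchains r (grow \<sigma> r r)"
proof -
  have inj: "inj \<sigma>" using perms_inj[OF assms] .
  have "\<exists>a. a \<notin> grow \<sigma> r k \<and> grow \<sigma> r (Suc k) = insert a (grow \<sigma> r k)" if "k < r" for k
  proof (rule step_card_Suc)
    show "step (grow \<sigma> r k) (grow \<sigma> r (Suc k))" using grow_inv[OF inj, of r "Suc k"] by simp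
    show "finite (grow \<sigma> r k)" using grow_inv[OF inj, of r k] young_finite by blast
    show "card (grow \<sigma> r (Suc k)) = Suc (card (grow \<sigma> r k))"
      using grow_inv[OF inj, of r "Suc k"] grow_inv[OF inj, of r k] NN_right[OF assms, of k] NN_right[OF assms, of "Suc k"] that
      by simp
  qed
  then show ?thesis unfolding tchains_def rightc_def using grow_inv[OF inj] by auto
qed

lemma boundary_inj:
  assumes s: "\<sigma> \<in> perms r" and t: "\<tau> \<in> perms r"
    and tc: "topc \<sigma> r = topc \<tau> r" and rc: "rightc \<sigma> r = rightc \<tau> r"
  shows "\<sigma> = \<tau>"
proof -
  have injs: "inj \<sigma>" and injt: "inj \<tau>" using perms_inj s t by auto
  have top: "grow \<sigma> i r = grow \<tau> i r" if "i \<le> r" for i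
    using fun_cong[OF tc, of i] that unfolding topc_def by simp
  have right: "grow \<sigma> r j = grow \<tau> r j" if "j \<le> r" for j
    using fun_cong[OF rc, of j] that unfolding rightc_def by simp
  have cell: "grow \<sigma> i j = grow \<tau> i j \<and> (\<sigma> i = j \<longleftrightarrow> \<tau> i = j)"
    if "i < r" "j < r" "grow \<sigma> (Suc i) j = grow \<tau> (Suc i) j" "grow \<sigma> i (Suc j) = grow \<tau> i (Suc j)"
      "grow \<sigma> (Suc i) (Suc j) = grow \<tau> (Suc i) (Suc j)" for i j
  proof -
    have ok1: "cellok (grow \<sigma> i j) (grow \<sigma> (Suc i) j) (grow \<sigma> i (Suc j)) (\<sigma> i = j)"
      by (rule grow_cellok[OF injs])
    have ok2: "cellok (grow \<tau> i j) (grow \<sigma> (Suc i) j) (grow \<sigma> i (Suc j)) (\<tau> i = j)"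
      using grow_cellok[OF injt, of i j] that(3,4) by simp
    have "loc (grow \<sigma> i j) (grow \<sigma> (Suc i) j) (grow \<sigma> i (Suc j)) (\<sigma> i = j)
        = loc (grow \<tau> i j) (grow \<sigma> (Suc i) j) (grow \<sigma> i (Suc j)) (\<tau> i = j)"
      using that(3,4,5) by (metis grow.simps(3))
    then show ?thesis using loc_unique[OF ok1 ok2] by simp
  qed
  have all: "\<forall>i j. i \<le> r \<longrightarrow> j \<le> r \<longrightarrow> (r - i) + (r - j) = d \<longrightarrow> grow \<sigma> i j = grow \<tau> i j" for d
  proof (induction d rule: less_induct)
    case (less d)
    show ?case
    proof (intro allI impI)
      fix i j assume ij: "i \<le> r" "j \<le> r" "(r - i) + (r - j) = d"
      show "grow \<sigma> i j = grow \<tau> i j"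
      proof (cases "i = r \<or> j = r")
        case True then show ?thesis using top right ij by auto
      next
        case False
        then have lt: "i < r" "j < r" using ij by auto
        have d1: "(r - Suc i) + (r - j) < d" and d2: "(r - i) + (r - Suc j) < d"
          and d3: "(r - Suc i) + (r - Suc j) < d" using lt ij by linarith+
        have "grow \<sigma> (Suc i) j = grow \<tau> (Suc i) j"
          using less[OF d1, rule_format, of "Suc i" j] lt by (simp del: grow.simps)
        moreover have "grow \<sigma> i (Suc j) = grow \<tau> i (Suc j)"
          using less[OF d2, rule_format, of i "Suc j"] lt by (simp del: grow.simps)
        moreover have "grow \<sigma> (Suc i) (Suc j) = grow \<tau> (Suc i) (Suc j)"
          using less[OF d3, rule_format, of "Suc i" "Suc j"] lt by (simp del: grow.simps)
        ultimately show ?thesis using cell[OF lt] by blast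
      qed
    qed
  qed
  have geq: "grow \<sigma> i j = grow \<tau> i j" if "i \<le> r" "j \<le> r" for i j using all that by blast
  show "\<sigma> = \<tau>"
  proof
    fix i
    show "\<sigma> i = \<tau> i"
    proof (cases "i < r")
      case True
      have si: "\<sigma> i < r" using s True permutes_in_image[of \<sigma> "{..<r}" i] unfolding perms_def by auto
      have "\<sigma> i = \<sigma> i \<longleftrightarrow> \<tau> i = \<sigma> i"
        using cell[OF True si] geq[of "Suc i" "\<sigma> i"] geq[of i "Suc (\<sigma> i)"] geq[of "Suc i" "Suc (\<sigma> i)"] True si
        by (simp del: grow.simps)
      then show ?thesis by simp
    next
      case False
      then show ?thesis using s t permutes_not_in[of \<sigma> "{..<r}" i] permutes_not_in[of \<tau> "{..<r}" i]
        unfolding perms_def by simp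
    qed
  qed
qed

definition revc :: "(nat \<times> nat) set \<Rightarrow> (nat \<times> nat) set \<Rightarrow> (nat \<times> nat) set \<Rightarrow> (nat \<times> nat) set \<times> bool" where
  "revc \<mu> \<eta> \<rho> = (SOME p. cellok (fst p) \<mu> \<eta> (snd p) \<and> loc (fst p) \<mu> \<eta> (snd p) = \<rho>)"

lemma revc_spec:
  assumes "young \<mu>" "young \<eta>" "young \<rho>" "step \<mu> \<rho>" "step \<eta> \<rho>"
  shows "cellok (fst (revc \<mu> \<eta> \<rho>)) \<mu> \<eta> (snd (revc \<mu> \<eta> \<rho>)) \<and> loc (fst (revc \<mu> \<eta> \<rho>)) \<mu> \<eta> (snd (revc \<mu> \<eta> \<rho>)) = \<rho>"
proof -
  obtain \<nu> x where "cellok \<nu> \<mu> \<eta> x \<and> loc \<nu> \<mu> \<eta> x = \<rho>" using loc_exists[OF assms] by blast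
  then have "\<exists>p. cellok (fst p) \<mu> \<eta> (snd p) \<and> loc (fst p) \<mu> \<eta> (snd p) = \<rho>" by (intro exI[of _ "(\<nu>, x)"]) simp
  then show ?thesis unfolding revc_def by (rule someI_ex)
qed

function hh :: "nat \<Rightarrow> (nat \<Rightarrow> (nat \<times> nat) set) \<Rightarrow> (nat \<Rightarrow> (nat \<times> nat) set) \<Rightarrow> nat \<Rightarrow> nat \<Rightarrow> (nat \<times> nat) set" where
  "hh r t c i j = (if r \<le> i then c j else if r \<le> j then t i
     else fst (revc (hh r t c (Suc i) j) (hh r t c i (Suc j)) (hh r t c (Suc i) (Suc j))))"
  by auto
termination
  by (relation "measure (\<lambda>(r, t, c, i, j). (r - i) + (r - j))") auto

declare hh.simps [simp del]

definition XX :: "nat \<Rightarrow> (nat \<Rightarrow> (nat \<times> nat) set) \<Rightarrow> (nat \<Rightarrow> (nat \<times> nat) set) \<Rightarrow> nat \<Rightarrow> nat \<Rightarrow> bool" where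
  "XX r t c i j = snd (revc (hh r t c (Suc i) j) (hh r t c i (Suc j)) (hh r t c (Suc i) (Suc j)))"

lemma chains_card: "t \<in> tchains r D \<Longrightarrow> k \<le> r \<Longrightarrow> card (t k) = k"
proof (induction k)
  case 0 then show ?case unfolding tchains_def by simp
next
  case (Suc k)
  have "k < r" using Suc.prems by simp
  then obtain a where "a \<notin> t k" "t (Suc k) = insert a (t k)" using Suc.prems(1) unfolding tchains_def by blast
  moreover have "finite (t k)" using Suc.prems young_finite unfolding tchains_def by blast
  ultimately show ?case using Suc by simp
qed

lemma chains_step: "t \<in> tchains r D \<Longrightarrow> k < r \<Longrightarrow> step (t k) (t (Suc k))"
  unfolding tchains_def step_def by blast

context
  fixes r D t c
  assumes yD: "young D" and tC: "t \<in> tchains r D" and cC: "c \<in> tchains r D"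
begin

lemma hh_inv:
  "i \<le> r \<Longrightarrow> j \<le> r \<Longrightarrow> young (hh r t c i j)
     \<and> (i < r \<longrightarrow> step (hh r t c i j) (hh r t c (Suc i) j))
     \<and> (j < r \<longrightarrow> step (hh r t c i j) (hh r t c i (Suc j)))
     \<and> (i < r \<and> j < r \<longrightarrow> cellok (hh r t c i j) (hh r t c (Suc i) j) (hh r t c i (Suc j)) (XX r t c i j)
          \<and> loc (hh r t c i j) (hh r t c (Suc i) j) (hh r t c i (Suc j)) (XX r t c i j) = hh r t c (Suc i) (Suc j))"
proof (induction "(r - i) + (r - j)" arbitrary: i j rule: less_induct)
  case less
  have ty: "young (t k)" for k using tC unfolding tchains_def by auto
  have cy: "young (c k)" for k using cC unfolding tchains_def by auto
  have tr: "t r = D" "c r = D" using tC cC unfolding tchains_def by auto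
  show ?case
  proof (cases "r \<le> i")
    case True
    then have ir: "i = r" using less.prems by simp
    have "hh r t c i j = c j" "hh r t c i (Suc j) = c (Suc j)" using ir by (simp_all add: hh.simps)
    then show ?thesis using cy chains_step[OF cC, of j] ir by simp
  next
    case False
    then have ir: "i < r" by simp
    show ?thesis
    proof (cases "r \<le> j")
      case True
      then have jr: "j = r" using less.prems by simp
      have h1: "hh r t c i j = t i" using ir jr by (simp add: hh.simps)
      have h2: "hh r t c (Suc i) j = t (Suc i)"
      proof (cases "Suc i = r")
        case True then show ?thesis using jr tr by (simp add: hh.simps)
      next
        case False then show ?thesis using jr ir by (simp add: hh.simps)
      qed
      show ?thesis using h1 h2 ty chains_step[OF tC ir] jr by simp
    next
      case False
      then have jr: "j < r" by simp
      define \<mu> where "\<mu> = hh r t c (Suc i) j"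
      define \<eta> where "\<eta> = hh r t c i (Suc j)"
      define \<rho> where "\<rho> = hh r t c (Suc i) (Suc j)"
      have IH1: "young \<mu> \<and> step \<mu> \<rho>" using less.hyps[of "Suc i" j] ir jr unfolding \<mu>_def \<rho>_def by auto
      have IH2: "young \<eta> \<and> step \<eta> \<rho>" using less.hyps[of i "Suc j"] ir jr unfolding \<eta>_def \<rho>_def by auto
      have IH3: "young \<rho>" using less.hyps[of "Suc i" "Suc j"] ir jr unfolding \<rho>_def by auto
      have hij: "hh r t c i j = fst (revc \<mu> \<eta> \<rho>)" unfolding \<mu>_def \<eta>_def \<rho>_def
        using ir jr by (subst hh.simps) simp
      have xij: "XX r t c i j = snd (revc \<mu> \<eta> \<rho>)" unfolding XX_def \<mu>_def \<eta>_def \<rho>_def ..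
      have sp: "cellok (hh r t c i j) \<mu> \<eta> (XX r t c i j) \<and> loc (hh r t c i j) \<mu> \<eta> (XX r t c i j) = \<rho>"
        unfolding hij xij using revc_spec IH1 IH2 IH3 by blast
      then show ?thesis unfolding \<mu>_def \<eta>_def \<rho>_def cellok_def using ir jr by auto
    qed
  qed
qed

end

context
  fixes r D t c
  assumes yD: "young D" and tC: "t \<in> tchains r D" and cC: "c \<in> tchains r D"
begin

abbreviation "h \<equiv> hh r t c"
abbreviation "X \<equiv> XX r t c"

lemmas HI = hh_inv[OF yD tC cC]

lemma h_right: "j \<le> r \<Longrightarrow> h r j = c j"
  by (simp add: hh.simps)

lemma h_top: "i \<le> r \<Longrightarrow> h i r = t i"
proof -
  assume "i \<le> r"
  have "t r = D" "c r = D" using tC cC unfolding tchains_def by auto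
  then show "h i r = t i" using \<open>i \<le> r\<close> by (cases "i = r") (simp_all add: hh.simps)
qed

lemma step_sub: "step a b \<Longrightarrow> a \<subseteq> b"
  unfolding step_def by auto

lemma h_sub_col: "i \<le> r \<Longrightarrow> j \<le> r \<Longrightarrow> h i j \<subseteq> h r j"
proof (induction "r - i" arbitrary: i)
  case 0 then show ?case by simp
next
  case (Suc d)
  then have ir: "i < r" by simp
  have "h i j \<subseteq> h (Suc i) j" using HI[of i j] ir Suc.prems step_sub by auto
  also have "\<dots> \<subseteq> h r j" using Suc.hyps(1)[of "Suc i"] Suc.hyps(2) Suc.prems ir by simp
  finally show ?case .
qed

lemma h_sub_row: "i \<le> r \<Longrightarrow> j \<le> r \<Longrightarrow> h i j \<subseteq> h i r"
proof (induction "r - j" arbitrary: j)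
  case 0 then show ?case by simp
next
  case (Suc d)
  then have jr: "j < r" by simp
  have "h i j \<subseteq> h i (Suc j)" using HI[of i j] jr Suc.prems step_sub by auto
  also have "\<dots> \<subseteq> h i r" using Suc.hyps(1)[of "Suc j"] Suc.hyps(2) Suc.prems jr by simp
  finally show ?case .
qed

lemma h_col0: "i \<le> r \<Longrightarrow> h i 0 = {}"
  using h_sub_col[of i 0] h_right[of 0] cC unfolding tchains_def by auto

lemma h_row0: "j \<le> r \<Longrightarrow> h 0 j = {}"
  using h_sub_row[of 0 j] h_top[of 0] tC unfolding tchains_def by auto

lemma h_card_ident:
  assumes "i < r" "j < r"
  shows "card (h (Suc i) (Suc j)) + card (h i j) = card (h (Suc i) j) + card (h i (Suc j)) + (if X i j then 1 else 0)"
  using loc_props(4)[of "h i j" "h (Suc i) j" "h i (Suc j)" "X i j"] HI[of i j] assms by auto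

lemma h_rowcount:
  assumes "i < r"
  shows "j \<le> r \<Longrightarrow> card (h (Suc i) j) = card (h i j) + card {j'. j' < j \<and> X i j'}"
proof (induction j)
  case 0 then show ?case using h_col0 assms by simp
next
  case (Suc j)
  then have jr: "j < r" by simp
  have s: "{j'. j' < Suc j \<and> X i j'} = (if X i j then insert j {j'. j' < j \<and> X i j'} else {j'. j' < j \<and> X i j'})"
    using less_Suc_eq by auto
  have f: "finite {j'. j' < j \<and> X i j'}" by simp
  show ?case using h_card_ident[OF assms jr] Suc.IH jr s f by (auto split: if_splits)
qed

lemma h_colcount:
  assumes "j < r"
  shows "i \<le> r \<Longrightarrow> card (h i (Suc j)) = card (h i j) + card {i'. i' < i \<and> X i' j}"
proof (induction i)
  case 0 then show ?case using h_row0 assms by simp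
next
  case (Suc i)
  then have ir: "i < r" by simp
  have s: "{i'. i' < Suc i \<and> X i' j} = (if X i j then insert i {i'. i' < i \<and> X i' j} else {i'. i' < i \<and> X i' j})"
    using less_Suc_eq by auto
  have f: "finite {i'. i' < i \<and> X i' j}" by simp
  show ?case using h_card_ident[OF ir assms] Suc.IH ir s f by (auto split: if_splits)
qed

lemma row_one: "i < r \<Longrightarrow> card {j. j < r \<and> X i j} = 1"
  using h_rowcount[of i r] h_top[of i] h_top[of "Suc i"] chains_card[OF tC, of i] chains_card[OF tC, of "Suc i"]
  by simp

lemma col_one: "j < r \<Longrightarrow> card {i. i < r \<and> X i j} = 1"
  using h_colcount[of j r] h_right[of j] h_right[of "Suc j"] chains_card[OF cC, of j] chains_card[OF cC, of "Suc j"]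
  by simp

definition sig :: "nat \<Rightarrow> nat" where
  "sig i = (if i < r then (THE j. j < r \<and> X i j) else i)"

lemma sig_props:
  assumes "i < r"
  shows "sig i < r" "X i (sig i)" "\<And>j. j < r \<Longrightarrow> X i j \<Longrightarrow> j = sig i"
proof -
  obtain y where y: "{j. j < r \<and> X i j} = {y}" using row_one[OF assms] by (rule card_1_singletonE)
  have "sig i = y" unfolding sig_def using assms y by (auto intro!: the_equality)
  then show "sig i < r" "X i (sig i)" "\<And>j. j < r \<Longrightarrow> X i j \<Longrightarrow> j = sig i" using y by auto
qed

lemma sig_col_unique: "j < r \<Longrightarrow> a < r \<Longrightarrow> b < r \<Longrightarrow> X a j \<Longrightarrow> X b j \<Longrightarrow> a = b"
proof -
  assume j: "j < r" and a: "a < r" "X a j" and b: "b < r" "X b j"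
  obtain y where y: "{i. i < r \<and> X i j} = {y}" using col_one[OF j] by (rule card_1_singletonE)
  have "a \<in> {i. i < r \<and> X i j}" "b \<in> {i. i < r \<and> X i j}" using a b by simp_all
  then have "a = y" "b = y" unfolding y by simp_all
  then show "a = b" by simp
qed

lemma sig_perm: "sig \<in> perms r"
proof -
  have inj: "inj_on sig {..<r}"
  proof (rule inj_onI)
    fix a b assume ab: "a \<in> {..<r}" "b \<in> {..<r}" "sig a = sig b"
    then have a: "a < r" and b: "b < r" by auto
    have x1: "X a (sig a)" using sig_props(2)[OF a] .
    have x2: "X b (sig a)" using sig_props(2)[OF b] ab(3) by simp
    show "a = b" using sig_col_unique[OF sig_props(1)[OF a] a b x1 x2] .
  qed
  have sub: "sig ` {..<r} \<subseteq> {..<r}" using sig_props(1) by auto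
  have "sig ` {..<r} = {..<r}" using endo_inj_surj[OF _ sub inj] by simp
  then have "bij_betw sig {..<r} {..<r}" using inj by (simp add: bij_betw_def)
  moreover have "{x. sig x \<noteq> x} \<subseteq> {..<r}" unfolding sig_def by auto
  ultimately show ?thesis unfolding perms_def by (simp add: permutes_altdef)
qed

lemma grow_sig: "i \<le> r \<Longrightarrow> j \<le> r \<Longrightarrow> grow sig i j = h i j"
proof (induction i arbitrary: j)
  case 0 then show ?case using h_row0 by simp
next
  case (Suc i)
  note outer = Suc.IH
  have ir: "i < r" using Suc.prems by simp
  show ?case using Suc.prems(2)
  proof (induction j)
    case 0 then show ?case using h_col0 Suc.prems by simp
  next
    case (Suc j)
    then have jr: "j < r" by simp
    have e: "(sig i = j) = X i j"
    proof
      assume "sig i = j" then show "X i j" using sig_props(2)[OF ir] by simp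
    next
      assume "X i j" then show "sig i = j" using sig_props(3)[OF ir jr] by simp
    qed
    have "grow sig (Suc i) (Suc j) = loc (h i j) (h (Suc i) j) (h i (Suc j)) (X i j)"
      using outer[of j] outer[of "Suc j"] Suc.IH ir jr e by simp
    also have "\<dots> = h (Suc i) (Suc j)" using HI[of i j] ir jr by simp
    finally show ?case .
  qed
qed

lemma boundary_surj: "\<exists>\<sigma>\<in>perms r. topc \<sigma> r = t \<and> rightc \<sigma> r = c"
proof (intro bexI[of _ sig] conjI)
  show "sig \<in> perms r" by (rule sig_perm)
  have tr: "t k = t r" "c k = c r" if "r \<le> k" for k using tC cC that unfolding tchains_def by auto
  show "topc sig r = t"
  proof
    fix k
    show "topc sig r k = t k"
      unfolding topc_def using grow_sig[of "min k r" r] h_top[of "min k r"] tr[of k]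
      by (cases "k \<le> r") auto
  qed
  show "rightc sig r = c"
  proof
    fix k
    show "rightc sig r k = c k"
      unfolding rightc_def using grow_sig[of r "min k r"] h_right[of "min k r"] tr[of k]
      by (cases "k \<le> r") auto
  qed
qed

end

lemma AA_full: assumes "\<sigma> \<in> perms r" shows "AA \<sigma> r r = {..<r}"
proof -
  have "\<sigma> a < r" if "a < r" for a
    using assms that permutes_in_image[of \<sigma> "{..<r}" a] unfolding perms_def by auto
  then show ?thesis unfolding AA_def by auto
qed

lemma good_iff:
  assumes "\<sigma> \<in> perms r"
  shows "good n r \<sigma> \<longleftrightarrow> rowlen (grow \<sigma> r r) 0 \<le> n"
proof -
  have "rowlen (grow \<sigma> r r) 0 = LL \<sigma> r r" using grow_inv[OF perms_inj[OF assms], of r r] by simp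
  moreover have "LL \<sigma> r r \<le> n \<longleftrightarrow> (\<forall>S\<in>FF \<sigma> r r. card S \<le> n)"
    unfolding LL_def using FF_finite[of \<sigma> r r] FF_empty[of \<sigma> r r] by (subst Max_le_iff) auto
  moreover have "(\<forall>S\<in>FF \<sigma> r r. card S \<le> n) \<longleftrightarrow> good n r \<sigma>"
    unfolding FF_def good_def AA_full[OF assms] by auto
  ultimately show ?thesis by simp
qed

lemma chains_mono: "t \<in> tchains r D \<Longrightarrow> k \<le> r \<Longrightarrow> t k \<subseteq> D"
proof -
  assume tC: "t \<in> tchains r D" and k: "k \<le> r"
  have "t k \<subseteq> t r" if "k \<le> r" for k
    using that
  proof (induction "r - k" arbitrary: k)
    case 0 then show ?case by simp
  next
    case (Suc d)
    then have "k < r" by simp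
    then have "t k \<subseteq> t (Suc k)" using tC unfolding tchains_def by auto
    also have "\<dots> \<subseteq> t r" using Suc.hyps Suc.prems \<open>k < r\<close> by simp
    finally show ?case .
  qed
  then show ?thesis using k tC unfolding tchains_def by auto
qed

lemma chains_finite: assumes "finite D" shows "finite (tchains r D)"
proof -
  have inj: "inj_on (\<lambda>t. restrict t {..r}) (tchains r D)"
  proof (rule inj_onI)
    fix t t' assume t: "t \<in> tchains r D" and t': "t' \<in> tchains r D" and e: "restrict t {..r} = restrict t' {..r}"
    show "t = t'"
    proof
      fix k show "t k = t' k"
      proof (cases "k \<le> r")
        case True then show ?thesis using fun_cong[OF e, of k] by simp
      next
        case False then show ?thesis using t t' unfolding tchains_def by auto
      qed
    qed
  qed
  have "restrict t {..r} \<in> PiE {..r} (\<lambda>_. Pow D)" if "t \<in> tchains r D" for t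
    using chains_mono[OF that] by (auto simp: PiE_def extensional_def Pi_def)
  then have "(\<lambda>t. restrict t {..r}) ` tchains r D \<subseteq> PiE {..r} (\<lambda>_. Pow D)" by blast
  moreover have "finite (PiE {..r} (\<lambda>_. Pow D))" using assms by (intro finite_PiE) auto
  ultimately have "finite ((\<lambda>t. restrict t {..r}) ` tchains r D)" by (rule finite_subset)
  then show ?thesis using finite_imageD[OF _ inj] by blast
qed

lemma chains_D: "t \<in> tchains r D \<Longrightarrow> t r = D"
  unfolding tchains_def by auto

lemma chains_cardD: "t \<in> tchains r D \<Longrightarrow> card D = r"
  using chains_card[of t r D r] chains_D by auto

lemma young_card_bound:
  assumes "young D" "card D = r" "(i, j) \<in> D"
  shows "i < r \<and> j < r"
proof -
  have fin: "finite D" using assms(1) young_finite by blast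
  have "(\<lambda>a. (a, 0)) ` {..i} \<subseteq> D" using youngD[OF assms(1,3)] by auto
  then have "card ((\<lambda>a. (a, 0::nat)) ` {..i}) \<le> card D" using card_mono[OF fin] by blast
  moreover have "card ((\<lambda>a. (a, 0::nat)) ` {..i}) = Suc i" by (subst card_image) (auto simp: inj_on_def)
  ultimately have 1: "i < r" using assms(2) by simp
  have "(\<lambda>b. (0::nat, b)) ` {..j} \<subseteq> D" using youngD[OF assms(1,3)] by auto
  then have "card ((\<lambda>b. (0::nat, b)) ` {..j}) \<le> card D" using card_mono[OF fin] by blast
  moreover have "card ((\<lambda>b. (0::nat, b)) ` {..j}) = Suc j" by (subst card_image) (auto simp: inj_on_def)
  ultimately have 2: "j < r" using assms(2) by simp
  show ?thesis using 1 2 by simp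
qed

definition Ys :: "nat \<Rightarrow> nat \<Rightarrow> (nat \<times> nat) set set" where
  "Ys n r = {D. young D \<and> card D = r \<and> n < rowlen D 0}"

lemma Ys_finite: "finite (Ys n r)"
proof (rule finite_subset[of _ "Pow ({..<r} \<times> {..<r})"])
  show "Ys n r \<subseteq> Pow ({..<r} \<times> {..<r})"
    unfolding Ys_def using young_card_bound by fastforce
qed simp

definition Pairs :: "nat \<Rightarrow> nat \<Rightarrow> ((nat \<Rightarrow> (nat \<times> nat) set) \<times> (nat \<Rightarrow> (nat \<times> nat) set)) set" where
  "Pairs n r = (\<Union>D\<in>Ys n r. tchains r D \<times> tchains r D)"

lemma card_Pairs: "card (Pairs n r) = (\<Sum>D\<in>Ys n r. card (tchains r D) ^ 2)"
proof -
  have "card (Pairs n r) = (\<Sum>D\<in>Ys n r. card (tchains r D \<times> tchains r D))"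
    unfolding Pairs_def
  proof (rule card_UN_disjoint[OF Ys_finite])
    show "\<forall>D\<in>Ys n r. finite (tchains r D \<times> tchains r D)"
      unfolding Ys_def using chains_finite young_finite by blast
    show "\<forall>D\<in>Ys n r. \<forall>D'\<in>Ys n r. D \<noteq> D' \<longrightarrow> (tchains r D \<times> tchains r D) \<inter> (tchains r D' \<times> tchains r D') = {}"
      using chains_D by blast
  qed
  then show ?thesis by (simp add: card_cartesian_product power2_eq_square)
qed

lemma bad_bij:
  "bij_betw (\<lambda>\<sigma>. (topc \<sigma> r, rightc \<sigma> r)) {\<sigma>\<in>perms r. \<not> good n r \<sigma>} (Pairs n r)"
proof (rule bij_betw_imageI)
  show "inj_on (\<lambda>\<sigma>. (topc \<sigma> r, rightc \<sigma> r)) {\<sigma>\<in>perms r. \<not> good n r \<sigma>}"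
    using boundary_inj by (auto simp: inj_on_def)
  show "(\<lambda>\<sigma>. (topc \<sigma> r, rightc \<sigma> r)) ` {\<sigma>\<in>perms r. \<not> good n r \<sigma>} = Pairs n r"
  proof
    show "(\<lambda>\<sigma>. (topc \<sigma> r, rightc \<sigma> r)) ` {\<sigma>\<in>perms r. \<not> good n r \<sigma>} \<subseteq> Pairs n r"
    proof clarify
      fix \<sigma> assume s: "\<sigma> \<in> perms r" "\<not> good n r \<sigma>"
      have tc: "topc \<sigma> r \<in> tchains r (grow \<sigma> r r)" and rc: "rightc \<sigma> r \<in> tchains r (grow \<sigma> r r)"
        using topc_chain[OF s(1)] rightc_chain[OF s(1)] .
      have "grow \<sigma> r r \<in> Ys n r"
        unfolding Ys_def using grow_inv[OF perms_inj[OF s(1)], of r r] chains_cardD[OF tc] good_iff[OF s(1)] s(2)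
        by auto
      then show "(topc \<sigma> r, rightc \<sigma> r) \<in> Pairs n r" unfolding Pairs_def using tc rc by blast
    qed
    show "Pairs n r \<subseteq> (\<lambda>\<sigma>. (topc \<sigma> r, rightc \<sigma> r)) ` {\<sigma>\<in>perms r. \<not> good n r \<sigma>}"
    proof
      fix p assume "p \<in> Pairs n r"
      then obtain D t c where D: "D \<in> Ys n r" and p: "p = (t, c)" and t: "t \<in> tchains r D" and c: "c \<in> tchains r D"
        unfolding Pairs_def by blast
      have yD: "young D" using D unfolding Ys_def by simp
      obtain \<sigma> where s: "\<sigma> \<in> perms r" "topc \<sigma> r = t" "rightc \<sigma> r = c"
        using boundary_surj[OF yD t c] by blast
      have "grow \<sigma> r r = D"
        using fun_cong[OF s(2), of r] chains_D[OF t] unfolding topc_def by simp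
      then have "\<not> good n r \<sigma>" using good_iff[OF s(1)] D unfolding Ys_def by simp
      then show "p \<in> (\<lambda>\<sigma>. (topc \<sigma> r, rightc \<sigma> r)) ` {\<sigma>\<in>perms r. \<not> good n r \<sigma>}"
        using s p by blast
    qed
  qed
qed

lemma card_bad: "card {\<sigma>\<in>perms r. \<not> good n r \<sigma>} = (\<Sum>D\<in>Ys n r. card (tchains r D) ^ 2)"
  using bij_betw_same_card[OF bad_bij] card_Pairs by simp

lemma young_cells_Sigma: "young_cells lam = Sigma {..<length lam} (\<lambda>i. {..<lam ! i})"
  unfolding young_cells_def by auto

lemma part_nth_mono:
  assumes "lam \<in> partitions r" "i' \<le> i" "i < length lam"
  shows "lam ! i \<le> lam ! i'"
proof (cases "i' = i")
  case False
  then have "i' < i" using assms by simp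
  have "sorted_wrt (\<ge>) lam" using assms(1) unfolding partitions_def by simp
  from sorted_wrt_nth_less[OF this \<open>i' < i\<close> assms(3)] show ?thesis by simp
qed simp

lemma part_pos: "lam \<in> partitions r \<Longrightarrow> i < length lam \<Longrightarrow> 0 < lam ! i"
proof -
  assume "lam \<in> partitions r" "i < length lam"
  then have "lam ! i \<in> set lam" "0 \<notin> set lam" unfolding partitions_def by auto
  then have "lam ! i \<noteq> 0" by metis
  then show ?thesis by simp
qed

lemma young_cells_young: "lam \<in> partitions r \<Longrightarrow> young (young_cells lam)"
  unfolding young_def
proof (intro conjI allI impI)
  assume "lam \<in> partitions r"
  show "finite (young_cells lam)" unfolding young_cells_Sigma by auto
  fix i j i' j' assume "(i, j) \<in> young_cells lam" "i' \<le> i" "j' \<le> j"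
  then show "(i', j') \<in> young_cells lam"
    using part_nth_mono[OF \<open>lam \<in> partitions r\<close>, of i' i] unfolding young_cells_def by auto
qed

lemma card_young_cells: "card (young_cells lam) = sum_list lam"
  unfolding young_cells_Sigma by (simp add: sum_list_sum_nth atLeast0LessThan)

lemma rowlen_young_cells:
  assumes "lam \<in> partitions r"
  shows "rowlen (young_cells lam) k = (if k < length lam then lam ! k else 0)"
  by (rule rowlen_eqI[OF young_cells_young[OF assms]]) (auto simp: young_cells_def)

lemma young_cells_col0:
  assumes "lam \<in> partitions r"
  shows "(k, 0) \<in> young_cells lam \<longleftrightarrow> k < length lam"
  using part_pos[OF assms] unfolding young_cells_def by auto

lemma young_cells_inj: "inj_on young_cells (partitions r)"
proof (rule inj_onI)
  fix lam mu assume l: "lam \<in> partitions r" and m: "mu \<in> partitions r" and e: "young_cells lam = young_cells mu"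
  have len: "length lam = length mu"
  proof -
    have "k < length lam \<longleftrightarrow> k < length mu" for k
      using young_cells_col0[OF l, of k] young_cells_col0[OF m, of k] e by simp
    then show ?thesis by (metis less_irrefl linorder_neqE_nat)
  qed
  show "lam = mu"
  proof (rule nth_equalityI[OF len])
    fix i assume "i < length lam"
    then show "lam ! i = mu ! i"
      using rowlen_young_cells[OF l, of i] rowlen_young_cells[OF m, of i] e len by simp
  qed
qed

definition colh :: "(nat \<times> nat) set \<Rightarrow> nat" where
  "colh D = (LEAST i. (i, 0) \<notin> D)"

lemma finite_col_ex: "finite (D :: (nat \<times> nat) set) \<Longrightarrow> \<exists>i. (i, 0) \<notin> D"
proof (rule ccontr)
  assume fin: "finite D" and "\<not> (\<exists>i. (i, 0) \<notin> D)"
  then have sub: "range (\<lambda>i::nat. (i, 0::nat)) \<subseteq> D" by auto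
  have f: "finite (range (\<lambda>i::nat. (i, 0::nat)))" by (rule finite_subset[OF sub fin])
  have "inj (\<lambda>i::nat. (i, 0::nat))" by (auto simp: inj_def)
  then have "finite (UNIV :: nat set)" using finite_imageD[OF f] by blast
  then show False by simp
qed

lemma young_col: "young D \<Longrightarrow> (i, 0) \<in> D \<longleftrightarrow> i < colh D"
proof
  assume y: "young D"
  have ex: "\<exists>i. (i, 0) \<notin> D" using finite_col_ex[OF young_finite[OF y]] .
  have nin: "(colh D, 0) \<notin> D" unfolding colh_def using LeastI_ex[OF ex] .
  {
    assume "(i, 0) \<in> D"
    show "i < colh D"
    proof (rule ccontr)
      assume "\<not> i < colh D"
      then have "(colh D, 0) \<in> D" using youngD[OF y \<open>(i, 0) \<in> D\<close>, of "colh D" 0] by simp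
      then show False using nin by simp
    qed
  }
  {
    assume "i < colh D"
    then show "(i, 0) \<in> D" unfolding colh_def using not_less_Least by blast
  }
qed

definition shape_of :: "(nat \<times> nat) set \<Rightarrow> nat list" where
  "shape_of D = map (rowlen D) [0..<colh D]"

lemma shape_of_cells:
  assumes y: "young D"
  shows "young_cells (shape_of D) = D"
proof
  show "young_cells (shape_of D) \<subseteq> D"
    unfolding young_cells_def shape_of_def using young_row[OF y] by auto
  show "D \<subseteq> young_cells (shape_of D)"
  proof
    fix c assume c: "c \<in> D"
    obtain i j where ij: "c = (i, j)" by (cases c)
    have "(i, 0) \<in> D" using youngD[OF y, of i j i 0] c ij by simp
    then have "i < colh D" using young_col[OF y] by simp
    moreover have "j < rowlen D i" using c ij young_row[OF y] by simp
    ultimately show "c \<in> young_cells (shape_of D)" unfolding young_cells_def shape_of_def ij by simp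
  qed
qed

lemma shape_of_part:
  assumes y: "young D" and cd: "card D = r"
  shows "shape_of D \<in> partitions r"
  unfolding partitions_def
proof (intro CollectI conjI)
  show "sum_list (shape_of D) = r"
    using card_young_cells[of "shape_of D"] shape_of_cells[OF y] cd by simp
  show "sorted_wrt (\<ge>) (shape_of D)"
    unfolding shape_of_def sorted_wrt_iff_nth_less
  proof (intro allI impI)
    fix i j assume "i < j" "j < length (map (rowlen D) [0..<colh D])"
    then show "map (rowlen D) [0..<colh D] ! j \<le> map (rowlen D) [0..<colh D] ! i"
      using rowlen_mono[OF y, of i j] by simp
  qed
  show "0 \<notin> set (shape_of D)"
  proof
    assume "0 \<in> set (shape_of D)"
    then obtain k where k: "k < colh D" "rowlen D k = 0" unfolding shape_of_def by auto
    have "(k, 0) \<in> D" using young_col[OF y] k(1) by simp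
    then show False using young_row[OF y] k(2) by simp
  qed
qed

lemma part_nonempty: "lam \<in> partitions r \<Longrightarrow> 1 \<le> r \<Longrightarrow> lam \<noteq> []"
  unfolding partitions_def by auto

lemma hd_rowlen: "lam \<in> partitions r \<Longrightarrow> 1 \<le> r \<Longrightarrow> hd lam = rowlen (young_cells lam) 0"
  using rowlen_young_cells[of lam r 0] part_nonempty[of lam r] by (simp add: hd_conv_nth)

lemma young_cells_bij:
  assumes "1 \<le> r"
  shows "bij_betw young_cells {lam\<in>partitions r. n < hd lam} (Ys n r)"
proof (rule bij_betw_imageI)
  show "inj_on young_cells {lam\<in>partitions r. n < hd lam}"
    using young_cells_inj by (rule inj_on_subset) auto
  show "young_cells ` {lam\<in>partitions r. n < hd lam} = Ys n r"
  proof
    show "young_cells ` {lam\<in>partitions r. n < hd lam} \<subseteq> Ys n r"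
    proof clarify
      fix lam assume "lam \<in> partitions r" "n < hd lam"
      then show "young_cells lam \<in> Ys n r"
        unfolding Ys_def using young_cells_young card_young_cells hd_rowlen[OF _ assms]
        by (auto simp: partitions_def)
    qed
    show "Ys n r \<subseteq> young_cells ` {lam\<in>partitions r. n < hd lam}"
    proof
      fix D assume "D \<in> Ys n r"
      then have y: "young D" and cd: "card D = r" and rl: "n < rowlen D 0" unfolding Ys_def by auto
      have p: "shape_of D \<in> partitions r" using shape_of_part[OF y cd] .
      have "hd (shape_of D) = rowlen D 0" using hd_rowlen[OF p assms] shape_of_cells[OF y] by simp
      then show "D \<in> young_cells ` {lam\<in>partitions r. n < hd lam}"
        using p rl shape_of_cells[OF y] by (metis (mono_tags, lifting) image_eqI mem_Collect_eq)
    qed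
  qed
qed

definition stdT :: "(nat \<times> nat) set \<Rightarrow> nat \<Rightarrow> ((nat \<times> nat) \<Rightarrow> nat) set" where
  "stdT D r = {T. bij_betw T D {1..r} \<and> (\<forall>c. c \<notin> D \<longrightarrow> T c = 0) \<and>
     (\<forall>i j. (i, j) \<in> D \<and> (i, Suc j) \<in> D \<longrightarrow> T (i, j) < T (i, Suc j)) \<and>
     (\<forall>i j. (i, j) \<in> D \<and> (Suc i, j) \<in> D \<longrightarrow> T (i, j) < T (Suc i, j))}"

lemma std_eq: "standard_tableaux lam = stdT (young_cells lam) (sum_list lam)"
  unfolding standard_tableaux_def stdT_def ..

context
  fixes D r
  assumes yD: "young D" and cD: "card D = r"
begin

lemma T_mono_row:
  assumes T: "T \<in> stdT D r" and c: "(i, j) \<in> D" and le: "j' \<le> j"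
  shows "T (i, j') \<le> T (i, j)"
  using c le
proof (induction "j - j'" arbitrary: j)
  case 0 then show ?case by simp
next
  case (Suc d)
  then obtain j0 where j0: "j = Suc j0" by (cases j) auto
  have c0: "(i, j0) \<in> D" using youngD[OF yD Suc.prems(1), of i j0] j0 by simp
  have "T (i, j') \<le> T (i, j0)" using Suc.hyps(1)[of j0] Suc.hyps(2) Suc.prems c0 j0 by simp
  also have "\<dots> < T (i, j)" using T c0 Suc.prems(1) j0 unfolding stdT_def by blast
  finally show ?case by simp
qed

lemma T_mono_col:
  assumes T: "T \<in> stdT D r" and c: "(i, j) \<in> D" and le: "i' \<le> i"
  shows "T (i', j) \<le> T (i, j)"
  using c le
proof (induction "i - i'" arbitrary: i)
  case 0 then show ?case by simp
next
  case (Suc d)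
  then obtain i0 where i0: "i = Suc i0" by (cases i) auto
  have c0: "(i0, j) \<in> D" using youngD[OF yD Suc.prems(1), of i0 j] i0 by simp
  have "T (i', j) \<le> T (i0, j)" using Suc.hyps(1)[of i0] Suc.hyps(2) Suc.prems c0 i0 by simp
  also have "\<dots> < T (i, j)" using T c0 Suc.prems(1) i0 unfolding stdT_def by blast
  finally show ?case by simp
qed

lemma T_mono:
  assumes T: "T \<in> stdT D r" and c: "(i, j) \<in> D" and le: "i' \<le> i" "j' \<le> j"
  shows "T (i', j') \<le> T (i, j)"
proof -
  have c': "(i', j) \<in> D" using youngD[OF yD c le(1)] by simp
  have "T (i', j') \<le> T (i', j)" by (rule T_mono_row[OF T c' le(2)])
  also have "\<dots> \<le> T (i, j)" by (rule T_mono_col[OF T c le(1)])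
  finally show ?thesis .
qed

lemma std_zero: "T \<in> stdT D r \<Longrightarrow> c \<notin> D \<Longrightarrow> T c = 0"
  unfolding stdT_def by blast

definition FT :: "((nat \<times> nat) \<Rightarrow> nat) \<Rightarrow> nat \<Rightarrow> (nat \<times> nat) set" where
  "FT T = (\<lambda>k. {c\<in>D. T c \<le> k})"

lemma T_range: "T \<in> stdT D r \<Longrightarrow> c \<in> D \<Longrightarrow> 1 \<le> T c \<and> T c \<le> r"
  unfolding stdT_def bij_betw_def by auto

lemma FT_chain: assumes T: "T \<in> stdT D r" shows "FT T \<in> tchains r D"
  unfolding tchains_def
proof (intro CollectI conjI allI impI)
  have "\<not> T c \<le> 0" if "c \<in> D" for c using T_range[OF T that] by simp
  then show "FT T 0 = {}" unfolding FT_def by auto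
  fix k
  show "young (FT T k)"
    unfolding young_def FT_def
  proof (intro conjI allI impI)
    show "finite {c \<in> D. T c \<le> k}" using young_finite[OF yD] by simp
    fix i j i' j' assume h: "(i, j) \<in> {c \<in> D. T c \<le> k}" and le: "i' \<le> i" "j' \<le> j"
    then have h1: "(i, j) \<in> D" and h2: "T (i, j) \<le> k" by auto
    have "(i', j') \<in> D" by (rule youngD[OF yD h1 le])
    moreover have "T (i', j') \<le> T (i, j)" by (rule T_mono[OF T h1 le])
    ultimately show "(i', j') \<in> {c \<in> D. T c \<le> k}" using h2 by simp
  qed
  {
    assume k: "k < r"
    have "Suc k \<in> {1..r}" using k by simp
    moreover have "T ` D = {1..r}" using T unfolding stdT_def bij_betw_def by blast
    ultimately have "Suc k \<in> T ` D" by simp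
    then obtain a where a: "a \<in> D" "T a = Suc k" by (auto elim!: imageE)
    have inj: "inj_on T D" using T unfolding stdT_def bij_betw_def by blast
    have "FT T (Suc k) = insert a (FT T k)"
    proof
      show "FT T (Suc k) \<subseteq> insert a (FT T k)"
      proof
        fix c assume "c \<in> FT T (Suc k)"
        then have c: "c \<in> D" "T c \<le> Suc k" unfolding FT_def by auto
        show "c \<in> insert a (FT T k)"
        proof (cases "T c = Suc k")
          case True then have "T c = T a" using a by simp
          then have "c = a" using inj_onD[OF inj _ c(1) a(1)] by simp
          then show ?thesis by simp
        next
          case False then show ?thesis using c unfolding FT_def by auto
        qed
      qed
      show "insert a (FT T k) \<subseteq> FT T (Suc k)" using a unfolding FT_def by auto
    qed
    moreover have "a \<notin> FT T k" using a unfolding FT_def by simp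
    ultimately show "\<exists>a. a \<notin> FT T k \<and> FT T (Suc k) = insert a (FT T k)" by blast
  }
  {
    assume "r \<le> k"
    then have "T c \<le> k" if "c \<in> D" for c using T_range[OF T that] by simp
    then show "FT T k = D" unfolding FT_def by auto
  }
qed

lemma FT_inj: "inj_on FT (stdT D r)"
proof (rule inj_onI)
  fix T T' assume T: "T \<in> stdT D r" and T': "T' \<in> stdT D r" and e: "FT T = FT T'"
  show "T = T'"
  proof
    fix c show "T c = T' c"
    proof (cases "c \<in> D")
      case False then show ?thesis using std_zero[OF T False] std_zero[OF T' False] by simp
    next
      case True
      have "c \<in> FT T (T c)" using True unfolding FT_def by simp
      then have "c \<in> FT T' (T c)" using e by simp
      then have 1: "T' c \<le> T c" unfolding FT_def by simp
      have "c \<in> FT T' (T' c)" using True unfolding FT_def by simp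
      then have "c \<in> FT T (T' c)" using e by simp
      then have 2: "T c \<le> T' c" unfolding FT_def by simp
      show ?thesis using 1 2 by simp
    qed
  qed
qed

lemma chain_mono_all: assumes t: "t \<in> tchains r D" shows "k \<le> k' \<Longrightarrow> t k \<subseteq> t k'"
proof (induction k' rule: dec_induct)
  case base then show ?case by simp
next
  case (step m)
  have "t m \<subseteq> t (Suc m)"
  proof (cases "m < r")
    case True then show ?thesis using t unfolding tchains_def by auto
  next
    case False then show ?thesis using t unfolding tchains_def by auto
  qed
  then show ?case using step by auto
qed

lemma chain_subD: assumes t: "t \<in> tchains r D" shows "t k \<subseteq> D"
proof (cases "k \<le> r")
  case True then show ?thesis using chains_mono[OF t] by simp
next
  case False then show ?thesis using t unfolding tchains_def by auto
qed

definition TF :: "(nat \<Rightarrow> (nat \<times> nat) set) \<Rightarrow> (nat \<times> nat) \<Rightarrow> nat" where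
  "TF t c = (if c \<in> D then (LEAST k. c \<in> t k) else 0)"

lemma TF_iff:
  assumes t: "t \<in> tchains r D" and c: "c \<in> D"
  shows "c \<in> t k \<longleftrightarrow> TF t c \<le> k"
proof -
  have ex: "c \<in> t r" using c t unfolding tchains_def by auto
  have L: "c \<in> t (TF t c)" unfolding TF_def using c LeastI[of "\<lambda>k. c \<in> t k", OF ex] by simp
  show ?thesis
  proof
    assume "c \<in> t k" then show "TF t c \<le> k" unfolding TF_def using c by (simp add: Least_le)
  next
    assume "TF t c \<le> k" then show "c \<in> t k" using chain_mono_all[OF t] L by blast
  qed
qed

lemma TF_std: assumes t: "t \<in> tchains r D" shows "TF t \<in> stdT D r"
proof -
  have t0: "t 0 = {}" and tr: "t r = D" and ty: "\<And>k. young (t k)"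
    and ts: "\<And>k. k < r \<Longrightarrow> \<exists>a. a \<notin> t k \<and> t (Suc k) = insert a (t k)"
    using t unfolding tchains_def by auto
  have rng: "1 \<le> TF t c \<and> TF t c \<le> r" if "c \<in> D" for c
  proof
    show "TF t c \<le> r" using TF_iff[OF t that, of r] tr that by simp
    show "1 \<le> TF t c"
    proof (rule ccontr)
      assume "\<not> 1 \<le> TF t c"
      then have "TF t c \<le> 0" by simp
      then have "c \<in> t 0" using TF_iff[OF t that] by simp
      then show False using t0 by simp
    qed
  qed
  have exact: "TF t c = Suc k \<longleftrightarrow> c \<in> t (Suc k) \<and> c \<notin> t k" if "c \<in> D" for c k
    using TF_iff[OF t that, of k] TF_iff[OF t that, of "Suc k"] by auto
  have inj: "inj_on (TF t) D"
  proof (rule inj_onI)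
    fix c c' assume c: "c \<in> D" and c': "c' \<in> D" and e: "TF t c = TF t c'"
    obtain k where k: "TF t c = Suc k" using rng[OF c] by (metis Suc_le_D One_nat_def)
    have kr: "k < r" using rng[OF c] k by simp
    obtain a where a: "a \<notin> t k" "t (Suc k) = insert a (t k)" using ts[OF kr] by blast
    have "c \<in> t (Suc k)" "c \<notin> t k" using exact[OF c] k by auto
    then have "c = a" using a by auto
    have "c' \<in> t (Suc k)" "c' \<notin> t k" using exact[OF c'] k e by auto
    then have "c' = a" using a by auto
    then show "c = c'" using \<open>c = a\<close> by simp
  qed
  have img: "TF t ` D = {1..r}"
  proof
    show "TF t ` D \<subseteq> {1..r}" using rng by auto
    show "{1..r} \<subseteq> TF t ` D"
    proof
      fix m assume m: "m \<in> {1..r}"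
      then obtain k where k: "m = Suc k" by (cases m) auto
      have kr: "k < r" using m k by simp
      obtain a where a: "a \<notin> t k" "t (Suc k) = insert a (t k)" using ts[OF kr] by blast
      have aD: "a \<in> D" using chain_subD[OF t, of "Suc k"] a by auto
      have "TF t a = Suc k" using exact[OF aD] a by auto
      then show "m \<in> TF t ` D" using aD k by (metis image_eqI)
    qed
  qed
  have row: "TF t (i, j) < TF t (i, Suc j)" if "(i, j) \<in> D" "(i, Suc j) \<in> D" for i j
  proof -
    have "(i, Suc j) \<in> t (TF t (i, Suc j))" using TF_iff[OF t that(2)] by simp
    then have "(i, j) \<in> t (TF t (i, Suc j))" using youngD[OF ty, of i "Suc j" _ i j] by simp
    then have "TF t (i, j) \<le> TF t (i, Suc j)" using TF_iff[OF t that(1)] by simp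
    moreover have "TF t (i, j) \<noteq> TF t (i, Suc j)" using inj_onD[OF inj _ that] by fastforce
    ultimately show ?thesis by simp
  qed
  have col: "TF t (i, j) < TF t (Suc i, j)" if "(i, j) \<in> D" "(Suc i, j) \<in> D" for i j
  proof -
    have "(Suc i, j) \<in> t (TF t (Suc i, j))" using TF_iff[OF t that(2)] by simp
    then have "(i, j) \<in> t (TF t (Suc i, j))" using youngD[OF ty, of "Suc i" j _ i j] by simp
    then have "TF t (i, j) \<le> TF t (Suc i, j)" using TF_iff[OF t that(1)] by simp
    moreover have "TF t (i, j) \<noteq> TF t (Suc i, j)" using inj_onD[OF inj _ that] by fastforce
    ultimately show ?thesis by simp
  qed
  show ?thesis unfolding stdT_def using inj img row col by (auto simp: bij_betw_def TF_def)
qed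

lemma FT_TF: assumes t: "t \<in> tchains r D" shows "FT (TF t) = t"
proof
  fix k
  show "FT (TF t) k = t k"
    unfolding FT_def using TF_iff[OF t] chain_subD[OF t, of k] by auto
qed

lemma FT_bij: "bij_betw FT (stdT D r) (tchains r D)"
proof (rule bij_betw_imageI[OF FT_inj])
  show "FT ` stdT D r = tchains r D"
  proof
    show "FT ` stdT D r \<subseteq> tchains r D" using FT_chain by auto
    show "tchains r D \<subseteq> FT ` stdT D r"
    proof
      fix t assume "t \<in> tchains r D"
      then show "t \<in> FT ` stdT D r" using FT_TF TF_std by (metis image_eqI)
    qed
  qed
qed

end

lemma card_std_chains:
  assumes "lam \<in> partitions r"
  shows "num_std_tableaux lam = card (tchains r (young_cells lam))"
proof -
  have y: "young (young_cells lam)" using young_cells_young[OF assms] .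
  have c: "card (young_cells lam) = r" using card_young_cells assms unfolding partitions_def by simp
  have s: "sum_list lam = r" using assms unfolding partitions_def by simp
  show ?thesis unfolding num_std_tableaux_def std_eq s
    using bij_betw_same_card[OF FT_bij[OF y c]] .
qed

theorem corollary3p7:
  fixes n r :: nat
  assumes "n \<ge> 1" and "r \<ge> 1"
  shows "\<exists>m. free_of_rank
            (module.span mscale ((Phi n r :: (nat \<Rightarrow> nat) \<Rightarrow> nat list \<Rightarrow> nat list \<Rightarrow> 'a::idom)
               ` {\<sigma>. \<sigma> permutes {..<r}})) m
          \<and> int m = int (fact r)
              - (\<Sum>lam\<in>{lam\<in>partitions r. hd lam > n}. int (num_std_tableaux lam) ^ 2)"
proof (intro exI conjI)
  show "free_of_rank
            (module.span mscale ((Phi n r :: (nat \<Rightarrow> nat) \<Rightarrow> nat list \<Rightarrow> nat list \<Rightarrow> 'a::idom)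
               ` {\<sigma>. \<sigma> permutes {..<r}})) (card {\<tau>\<in>perms r. good n r \<tau>})"
    by (rule free_main)
  have part: "card {\<tau>\<in>perms r. good n r \<tau>} + card {\<tau>\<in>perms r. \<not> good n r \<tau>} = fact r"
  proof -
    have "perms r = {\<tau>\<in>perms r. good n r \<tau>} \<union> {\<tau>\<in>perms r. \<not> good n r \<tau>}" by auto
    moreover have "card ({\<tau>\<in>perms r. good n r \<tau>} \<union> {\<tau>\<in>perms r. \<not> good n r \<tau>})
        = card {\<tau>\<in>perms r. good n r \<tau>} + card {\<tau>\<in>perms r. \<not> good n r \<tau>}"
      using perms_finite by (intro card_Un_disjoint) auto
    ultimately show ?thesis using card_perms by simp
  qed
  have sumeq: "(\<Sum>lam\<in>{lam\<in>partitions r. hd lam > n}. int (num_std_tableaux lam) ^ 2)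
      = (\<Sum>D\<in>Ys n r. int (card (tchains r D)) ^ 2)"
  proof -
    have "(\<Sum>lam\<in>{lam\<in>partitions r. hd lam > n}. int (num_std_tableaux lam) ^ 2)
        = (\<Sum>lam\<in>{lam\<in>partitions r. hd lam > n}. int (card (tchains r (young_cells lam))) ^ 2)"
      by (rule sum.cong) (auto simp: card_std_chains)
    also have "\<dots> = (\<Sum>D\<in>Ys n r. int (card (tchains r D)) ^ 2)"
      using sum.reindex_bij_betw[OF young_cells_bij[OF assms(2), of n], of "\<lambda>D. int (card (tchains r D)) ^ 2"]
      by simp
    finally show ?thesis .
  qed
  have "int (card {\<tau>\<in>perms r. \<not> good n r \<tau>}) = (\<Sum>D\<in>Ys n r. int (card (tchains r D)) ^ 2)"
    unfolding card_bad[of r n] by (simp add: of_nat_sum)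
  then show "int (card {\<tau>\<in>perms r. good n r \<tau>}) = int (fact r)
              - (\<Sum>lam\<in>{lam\<in>partitions r. hd lam > n}. int (num_std_tableaux lam) ^ 2)"
  proof -
    have "int (card {\<tau>\<in>perms r. good n r \<tau>}) + int (card {\<tau>\<in>perms r. \<not> good n r \<tau>}) = int (fact r)"
      using arg_cong[OF part, of int] by simp
    then show ?thesis using sumeq \<open>int (card {\<tau>\<in>perms r. \<not> good n r \<tau>}) = _\<close> by linarith
  qed
qed

end
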